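(* Let $\tau\in\mathbb C$ with $\mathrm{Im}(\tau)>0$ and set $q=\exp\bigl(\pi i\,\frac{4\tau-1}{4\tau}\bigr)$ (so $|q|<1$). With $\epsilon(q)=\prod_{n\ge1}(1+q^n)$ and $\bar\epsilon(q)=\epsilon(-q)$, one has $$2\epsilon(q)^2\bar\epsilon(q)^2-\left(\frac{\theta_2(0|2\tau)}{\theta_3(0|2\tau)}\right)^2\bigl(\epsilon(q)^4+\bar\epsilon(q)^4\bigr)=0.$$
   Context: For $\tau$ in the upper half plane and $z\in\mathbb C$, with $q_\tau=e^{\pi i\tau}$, $q_z=e^{\pi i z}$, the Jacobi theta functions are $\theta_2(z|\tau)=\sum_{n\in\mathbb Z}q_\tau^{(n+\frac12)^2}q_z^{2n+1}$ and $\theta_3(z|\tau)=\sum_{n\in\mathbb Z}q_\tau^{n^2}q_z^{2n}$, where $q_\tau^{c}$ means $e^{\pi i\tau c}$. *)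

theory Defs
  imports "HOL-Analysis.Analysis"
begin

definition theta2 :: "complex \<Rightarrow> complex \<Rightarrow> complex" where
  "theta2 z \<tau> = (\<Sum>\<^sub>\<infinity>n::int. exp (pi * \<i> * \<tau> * (of_int n + 1/2)^2) * exp (pi * \<i> * z * (2 * of_int n + 1)))"

definition theta3 :: "complex \<Rightarrow> complex \<Rightarrow> complex" where
  "theta3 z \<tau> = (\<Sum>\<^sub>\<infinity>n::int. exp (pi * \<i> * \<tau> * (of_int n)^2) * exp (pi * \<i> * z * (2 * of_int n)))"

definition eps :: "complex \<Rightarrow> complex" where
  "eps q = (\<Prod>n. (1 + q ^ (Suc n)))"

definition eps_bar :: "complex \<Rightarrow> complex" where
  "eps_bar q = eps (- q)"

end

theory Submission
  imports Defs "HOL-Complex_Analysis.Complex_Analysis"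
begin


definition tt :: "complex \<Rightarrow> complex \<Rightarrow> int \<Rightarrow> complex" where
  "tt t z n = exp (pi * \<i> * t * (of_int n)^2) * exp (pi * \<i> * z * (2 * of_int n))"

lemma theta3_tt: "theta3 z t = (\<Sum>\<^sub>\<infinity>n. tt t z n)"
  by (simp add: theta3_def tt_def)

lemma UNIV_int_split: "(UNIV::int set) = range int \<union> range (\<lambda>n. - int (Suc n))"
proof -
  have "k \<in> range int \<union> range (\<lambda>n. - int (Suc n))" for k :: int
  proof (cases "k \<ge> 0")
    case True then show ?thesis by (auto intro!: image_eqI[of _ _ "nat k"])
  next
    case False then show ?thesis by (auto intro!: image_eqI[of _ _ "nat (-k-1)"])
  qed
  then show ?thesis by auto
qed

lemma sq_bound:
  fixes b c m :: real assumes "b > 0"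
  shows "c * m - b * m^2 \<le> c^2 / (4 * b)"
proof -
  have "0 \<le> (c - 2 * b * m)^2" by simp
  then have "0 \<le> c^2 - 4*b*(c*m - b*m^2)" by (simp add: power2_eq_square algebra_simps)
  then show ?thesis using assms by (simp add: field_simps)
qed

lemma norm_tt: "norm (tt t z n) = exp (- pi * Im t * (of_int n)^2 - 2 * pi * of_int n * Im z)"
  by (simp add: tt_def norm_mult exp_add[symmetric] algebra_simps)

lemma summable_int_geom:
  fixes r :: real assumes r: "0 \<le> r" "r < 1"
  shows "(\<lambda>n::int. r ^ nat \<bar>n\<bar>) summable_on UNIV"
proof -
  have sg: "summable (\<lambda>n. norm (r ^ n))"
    using r by (simp add: norm_power summable_geometric)
  have "(\<lambda>n. r ^ n) summable_on UNIV"
    by (rule norm_summable_imp_summable_on[OF sg])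
  then have "((\<lambda>n::int. r ^ nat \<bar>n\<bar>) \<circ> int) summable_on UNIV"
    by (simp add: o_def)
  then have A: "(\<lambda>n::int. r ^ nat \<bar>n\<bar>) summable_on range int"
    by (subst summable_on_reindex) auto
  have sg2: "summable (\<lambda>n. norm (r ^ Suc n))"
    using summable_ignore_initial_segment[OF sg, of 1] by simp
  have "(\<lambda>n. r ^ Suc n) summable_on UNIV"
    by (rule norm_summable_imp_summable_on[OF sg2])
  moreover have "nat \<bar>- int (Suc n)\<bar> = Suc n" for n by simp
  ultimately have "((\<lambda>n::int. r ^ nat \<bar>n\<bar>) \<circ> (\<lambda>n. - int (Suc n))) summable_on UNIV"
    by (simp only: o_def)
  then have B: "(\<lambda>n::int. r ^ nat \<bar>n\<bar>) summable_on range (\<lambda>n. - int (Suc n))"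
    by (subst summable_on_reindex) (auto simp: inj_on_def)
  have "range int \<inter> range (\<lambda>n. - int (Suc n)) = {}" by auto
  from summable_on_Un_disjoint[OF A B this] show ?thesis by (simp only: UNIV_int_split[symmetric])
qed

definition tbnd :: "complex \<Rightarrow> real \<Rightarrow> int \<Rightarrow> real" where
  "tbnd t R n = exp ((2*pi*R+1)^2/(4*(pi*Im t))) * exp (-1) ^ nat \<bar>n\<bar>"

lemma tt_bound:
  assumes t: "Im t > 0" and z: "\<bar>Im z\<bar> \<le> R"
  shows "norm (tt t z n) \<le> tbnd t R n"
proof -
  define m where "m = \<bar>real_of_int n\<bar>"
  have m0: "m \<ge> 0" by (simp add: m_def)
  have "- 2 * pi * of_int n * Im z \<le> 2 * pi * R * m"
  proof -
    have "\<bar>of_int n * Im z\<bar> = m * \<bar>Im z\<bar>" by (simp add: m_def abs_mult)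
    also have "\<dots> \<le> m * R" by (rule mult_left_mono[OF z m0])
    finally have "\<bar>of_int n * Im z\<bar> \<le> m * R" .
    then have "-(of_int n * Im z) \<le> m * R" by linarith
    then have "2 * pi * (-(of_int n * Im z)) \<le> 2 * pi * (m * R)"
      by (intro mult_left_mono) auto
    then show ?thesis by (simp add: algebra_simps)
  qed
  moreover have sq: "(of_int n)^2 = m^2" by (simp add: m_def)
  moreover have e1: "(2*pi*R+1) * m - (pi * Im t) * m^2 - m = 2*pi*R*m - pi*Im t*m^2"
    by (simp add: algebra_simps)
  moreover have e2: "- pi * Im t * (of_int n)^2 = - pi*Im t*m^2" using sq by simp
  ultimately have "- pi * Im t * (of_int n)^2 - 2 * pi * of_int n * Im z \<le> (2*pi*R+1) * m - (pi * Im t) * m^2 - m"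
    by linarith
  also have "\<dots> \<le> (2*pi*R+1)^2/(4*(pi*Im t)) - m"
    using sq_bound[of "pi * Im t" "2*pi*R+1" m] t by simp
  finally have "norm (tt t z n) \<le> exp ((2*pi*R+1)^2/(4*(pi*Im t)) - m)"
    by (simp add: norm_tt)
  also have "\<dots> = tbnd t R n"
  proof -
    have "exp (-1) ^ nat \<bar>n\<bar> = exp (of_nat (nat \<bar>n\<bar>) * (-1::real))"
      by (rule exp_of_nat_mult[symmetric])
    also have "of_nat (nat \<bar>n\<bar>) = m" by (simp add: m_def)
    finally have e: "exp (-1) ^ nat \<bar>n\<bar> = exp (- m)" by simp
    show ?thesis unfolding tbnd_def e by (simp add: mult_exp_exp)
  qed
  finally show ?thesis .
qed


lemma tbnd_summable: "tbnd t R summable_on UNIV"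
  unfolding tbnd_def
  by (rule summable_on_cmult_right, rule summable_int_geom) auto

lemma tt_summable: assumes "Im t > 0" shows "tt t z summable_on UNIV"
proof -
  have "Infinite_Sum.abs_summable_on (tt t z) UNIV"
    by (rule Infinite_Sum.abs_summable_on_comparison_test'[OF tbnd_summable[of t "\<bar>Im z\<bar>"]])
       (use tt_bound[OF assms] in auto)
  then show ?thesis by (rule abs_summable_summable)
qed

lemma theta3_has_sum: assumes "Im t > 0" shows "(tt t z has_sum theta3 z t) UNIV"
  unfolding theta3_tt using tt_summable[OF assms] by (rule has_sum_infsum)

lemma theta3_unif:
  assumes "Im t > 0"
  shows "uniform_limit {z. \<bar>Im z\<bar> \<le> R} (\<lambda>X z. \<Sum>n\<in>X. tt t z n) (\<lambda>z. theta3 z t) (finite_subsets_at_top UNIV)"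
proof -
  have "uniform_limit {z. \<bar>Im z\<bar> \<le> R} (\<lambda>X z. \<Sum>n\<in>X. tt t z n) (\<lambda>z. \<Sum>\<^sub>\<infinity>n\<in>UNIV. tt t z n) (finite_subsets_at_top UNIV)"
    by (rule Weierstrass_m_test_general[OF _ tbnd_summable[of t R]]) (use tt_bound[OF assms] in auto)
  then show ?thesis by (simp add: theta3_tt)
qed

lemma holo_from_unif:
  fixes f :: "'a \<Rightarrow> complex \<Rightarrow> complex"
  assumes U: "\<And>R. uniform_limit {z. \<bar>Im z\<bar> \<le> R} (\<lambda>X z. \<Sum>n\<in>X. f n z) g (finite_subsets_at_top UNIV)"
    and H: "\<And>n. f n holomorphic_on UNIV"
  shows "g holomorphic_on UNIV"
proof -
  have "\<exists>f'. (g has_field_derivative f') (at w)" for w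
  proof -
    have sub: "cball w 1 \<subseteq> {z. \<bar>Im z\<bar> \<le> \<bar>Im w\<bar> + 1}"
    proof
      fix z assume "z \<in> cball w 1"
      then have "norm (z - w) \<le> 1" by (simp add: dist_norm norm_minus_commute)
      moreover have "\<bar>Im (z - w)\<bar> \<le> norm (z - w)" by (rule abs_Im_le_cmod)
      ultimately show "z \<in> {z. \<bar>Im z\<bar> \<le> \<bar>Im w\<bar> + 1}" by auto
    qed
    have ul: "uniform_limit (cball w 1) (\<lambda>X z. \<Sum>n\<in>X. f n z) g (finite_subsets_at_top UNIV)"
      by (rule uniform_limit_on_subset[OF U sub])
    have ev: "\<forall>\<^sub>F X in finite_subsets_at_top UNIV. continuous_on (cball w 1) (\<lambda>z. \<Sum>n\<in>X. f n z) \<and> (\<lambda>z. \<Sum>n\<in>X. f n z) holomorphic_on ball w 1"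
    proof (rule eventually_finite_subsets_at_top_weakI)
      fix X :: "'a set" assume "finite X"
      have "(\<lambda>z. \<Sum>n\<in>X. f n z) holomorphic_on UNIV"
        by (intro holomorphic_on_sum) (use H in auto)
      then show "continuous_on (cball w 1) (\<lambda>z. \<Sum>n\<in>X. f n z) \<and> (\<lambda>z. \<Sum>n\<in>X. f n z) holomorphic_on ball w 1"
        by (meson holomorphic_on_imp_continuous_on holomorphic_on_subset subset_UNIV)
    qed
    obtain "g holomorphic_on ball w 1"
      using holomorphic_uniform_limit[OF ev ul] by auto
    then show ?thesis
      using holomorphic_on_open[of "ball w 1" g] by auto
  qed
  then show ?thesis by (simp add: holomorphic_on_open)
qed

lemma tt_holo: "(\<lambda>z. tt t z n) holomorphic_on UNIV"
  unfolding tt_def by (intro holomorphic_intros)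

lemma theta3_holo: assumes "Im t > 0" shows "(\<lambda>z. theta3 z t) holomorphic_on UNIV"
  by (rule holo_from_unif[OF theta3_unif[OF assms] tt_holo])

lemma exp_2pi_int: "exp (2 * pi * \<i> * of_int k) = 1"
  by (simp add: exp_eq_1)

lemma tt_period: "tt t (z + 1) n = tt t z n"
proof -
  have e0: "pi * \<i> * (z + 1) * (2 * of_int n) = pi * \<i> * z * (2 * of_int n) + 2 * pi * \<i> * of_int n"
    by (simp add: algebra_simps)
  have e: "exp (pi * \<i> * (z + 1) * (2 * of_int n)) = exp (pi * \<i> * z * (2 * of_int n)) * exp (2 * pi * \<i> * of_int n)"
    unfolding e0 by (rule exp_add)
  show ?thesis unfolding tt_def e exp_2pi_int by simp
qed

lemma theta3_period: "theta3 (z + 1) t = theta3 z t"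
  by (simp add: theta3_tt tt_period)

lemma tt_quasi: "tt t (z + t) n = exp (- pi * \<i> * t - 2 * pi * \<i> * z) * tt t z (n + 1)"
  unfolding tt_def mult_exp_exp by (simp add: power2_eq_square algebra_simps)

lemma theta3_quasi: assumes "Im t > 0"
  shows "theta3 (z + t) t = exp (- pi * \<i> * t - 2 * pi * \<i> * z) * theta3 z t"
proof -
  have b: "bij_betw (\<lambda>n::int. n + 1) UNIV UNIV"
    by (rule bij_betwI[of _ _ _ "\<lambda>n. n - 1"]) auto
  have "((\<lambda>n. tt t z (n + 1)) has_sum theta3 z t) UNIV"
    using has_sum_reindex_bij_betw[OF b, of "tt t z"] theta3_has_sum[OF assms] by simp
  then have "((\<lambda>n. tt t (z + t) n) has_sum exp (- pi * \<i> * t - 2 * pi * \<i> * z) * theta3 z t) UNIV"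
    unfolding tt_quasi by (rule has_sum_cmult_right)
  then show ?thesis
    using theta3_has_sum[OF assms, of "z + t"] has_sum_unique by blast
qed

lemma exp_lin_integral:
  fixes c :: complex assumes "c \<noteq> 0"
  shows "((\<lambda>z. exp (c * z)) has_contour_integral (exp c - 1) / c) (linepath 0 1)"
proof -
  have "((\<lambda>z. exp (c * z)) has_contour_integral ((\<lambda>z. exp (c * z) / c) (pathfinish (linepath 0 1)) - (\<lambda>z. exp (c * z) / c) (pathstart (linepath 0 1)))) (linepath 0 1)"
    by (rule contour_integral_primitive[where S=UNIV, OF _ valid_path_linepath]) (use assms in \<open>auto intro!: derivative_eq_intros\<close>)
  then show ?thesis by (simp add: diff_divide_distrib)
qed

lemma const_integral: "((\<lambda>z. c) has_contour_integral c) (linepath 0 1)"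
proof -
  have "((\<lambda>z. c) has_contour_integral ((\<lambda>z. c * z) (pathfinish (linepath 0 1)) - (\<lambda>z. c * z) (pathstart (linepath 0 1)))) (linepath 0 1)"
    by (rule contour_integral_primitive[where S=UNIV, OF _ valid_path_linepath]) (auto intro!: derivative_eq_intros)
  then show ?thesis by simp
qed

lemma tt_integral: "((\<lambda>z. tt t z n) has_contour_integral (if n = 0 then 1 else 0)) (linepath 0 1)"
proof (cases "n = 0")
  case True then show ?thesis using const_integral[of 1] by (simp add: tt_def)
next
  case False
  define c where "c = 2 * pi * \<i> * of_int n"
  have c0: "c \<noteq> 0" using False by (simp add: c_def)
  have ec: "exp c = 1" unfolding c_def by (rule exp_2pi_int)
  have eq: "tt t z n = exp (pi * \<i> * t * (of_int n)^2) * exp (c * z)" for z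
    by (simp add: tt_def c_def algebra_simps)
  have "((\<lambda>z. exp (pi * \<i> * t * (of_int n)^2) * exp (c * z)) has_contour_integral exp (pi * \<i> * t * (of_int n)^2) * ((exp c - 1) / c)) (linepath 0 1)"
    by (rule has_contour_integral_lmul[OF exp_lin_integral[OF c0]])
  then show ?thesis using False by (simp add: eq ec)
qed

lemma theta3_integral: assumes t: "Im t > 0"
  shows "contour_integral (linepath 0 1) (\<lambda>z. theta3 z t) = 1"
proof -
  have sub: "path_image (linepath 0 1) \<subseteq> {z. \<bar>Im z\<bar> \<le> 0}"
    by (auto simp: closed_segment_def)
  have ul: "uniform_limit (path_image (linepath 0 1)) (\<lambda>X z. \<Sum>n\<in>X. tt t z n) (\<lambda>z. theta3 z t) (finite_subsets_at_top UNIV)"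
    by (rule uniform_limit_on_subset[OF theta3_unif[OF t] sub])
  have hs: "((\<lambda>z. \<Sum>n\<in>X. tt t z n) has_contour_integral (\<Sum>n\<in>X. if n = 0 then 1 else 0)) (linepath 0 1)"
    if "finite X" for X
    by (rule has_contour_integral_sum[OF that tt_integral])
  have ev: "\<forall>\<^sub>F X in finite_subsets_at_top UNIV. (\<lambda>z. \<Sum>n\<in>X. tt t z n) contour_integrable_on linepath 0 1"
    by (rule eventually_finite_subsets_at_top_weakI) (use hs in \<open>blast intro: has_contour_integral_integrable\<close>)
  have lim: "((\<lambda>X. contour_integral (linepath 0 1) (\<lambda>z. \<Sum>n\<in>X. tt t z n)) \<longlongrightarrow> contour_integral (linepath 0 1) (\<lambda>z. theta3 z t)) (finite_subsets_at_top UNIV)"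
    by (rule contour_integral_uniform_limit(2)[OF ev ul, where B=1]) (auto simp: finite_subsets_at_top_neq_bot)
  have ev1: "\<forall>\<^sub>F X in finite_subsets_at_top UNIV. contour_integral (linepath 0 1) (\<lambda>z. \<Sum>n\<in>X. tt t z n) = 1"
  proof -
    have "\<forall>\<^sub>F X in finite_subsets_at_top (UNIV::int set). finite X \<and> {0} \<subseteq> X"
      unfolding eventually_finite_subsets_at_top by (intro exI[of _ "{0}"]) auto
    then show ?thesis
    proof (rule eventually_mono)
      fix X :: "int set" assume X: "finite X \<and> {0} \<subseteq> X"
      have "contour_integral (linepath 0 1) (\<lambda>z. \<Sum>n\<in>X. tt t z n) = (\<Sum>n\<in>X. if n = 0 then 1 else 0)"
        using hs X contour_integral_unique by blast
      also have "\<dots> = 1" using X by (simp add: sum.delta)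
      finally show "contour_integral (linepath 0 1) (\<lambda>z. \<Sum>n\<in>X. tt t z n) = 1" .
    qed
  qed
  have "((\<lambda>X. contour_integral (linepath 0 1) (\<lambda>z. \<Sum>n\<in>X. tt t z n)) \<longlongrightarrow> 1) (finite_subsets_at_top UNIV)"
    by (rule tendsto_eventually[OF ev1])
  then show ?thesis using lim tendsto_unique finite_subsets_at_top_neq_bot by metis
qed



definition coef :: "(complex \<Rightarrow> complex) \<Rightarrow> int \<Rightarrow> complex" where
  "coef F n = contour_integral (linepath 0 1) (\<lambda>z. F z * exp (- 2 * pi * \<i> * of_int n * z))"

lemma trans_int:
  "contour_integral (linepath (a + c) (b + c)) h = contour_integral (linepath a b) (\<lambda>z. h (z + c))"
proof -
  have "linepath (a + c) (b + c) x = linepath a b x + c" for x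
    by (simp add: linepath_def scaleR_conv_of_real algebra_simps)
  then show ?thesis
    by (simp add: contour_integral_integral vector_derivative_linepath_at)
qed

lemma holo_integrable: "h holomorphic_on UNIV \<Longrightarrow> h contour_integrable_on linepath a b"
  by (rule contour_integrable_continuous_linepath)
     (meson holomorphic_on_imp_continuous_on continuous_on_subset subset_UNIV)

lemma holo_cont_seg: "h holomorphic_on UNIV \<Longrightarrow> continuous_on (closed_segment a b) h"
  by (meson holomorphic_on_imp_continuous_on continuous_on_subset subset_UNIV)

lemma per1:
  assumes H: "h holomorphic_on UNIV" and P: "\<And>z. h (z + 1) = h z"
  shows "contour_integral (linepath w (w + 1)) h = contour_integral (linepath 0 1) h"
proof -
  define g where "g = linepath 0 1 +++ linepath 1 (w+1) +++ linepath (w+1) w +++ linepath w 0"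
  have vg: "valid_path g" unfolding g_def by (intro valid_path_join) auto
  have "(h has_contour_integral 0) g"
    by (rule Cauchy_theorem_convex_simple[OF H convex_UNIV vg]) (auto simp: g_def)
  moreover have "(h has_contour_integral
      (contour_integral (linepath 0 1) h + (contour_integral (linepath 1 (w+1)) h +
       (contour_integral (linepath (w+1) w) h + contour_integral (linepath w 0) h)))) g"
    unfolding g_def
    by (intro has_contour_integral_join has_contour_integral_integral holo_integrable[OF H] valid_path_join)
       auto
  ultimately have s: "contour_integral (linepath 0 1) h + (contour_integral (linepath 1 (w+1)) h +
       (contour_integral (linepath (w+1) w) h + contour_integral (linepath w 0) h)) = 0"
    using has_contour_integral_unique by blast
  have "contour_integral (linepath 1 (w+1)) h = contour_integral (linepath (0+1) (w+1)) h" by simp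
  also have "\<dots> = contour_integral (linepath 0 w) h"
    unfolding trans_int P by simp
  finally have e1: "contour_integral (linepath 1 (w+1)) h = contour_integral (linepath 0 w) h" .
  have e2: "contour_integral (linepath (w+1) w) h = - contour_integral (linepath w (w+1)) h"
    by (rule contour_integral_reverse_linepath[OF holo_cont_seg[OF H]])
  have e3: "contour_integral (linepath w 0) h = - contour_integral (linepath 0 w) h"
    by (rule contour_integral_reverse_linepath[OF holo_cont_seg[OF H]])
  show ?thesis using s unfolding e1 e2 e3 by (simp add: algebra_simps)
qed

lemma mod_per:
  assumes P: "\<And>z. F (z + 1) = F z"
  shows "F (z + 1) * exp (- 2 * pi * \<i> * of_int k * (z + 1)) = F z * exp (- 2 * pi * \<i> * of_int k * z)"
proof -
  have e0: "- 2 * pi * \<i> * of_int k * (z + 1) = - 2 * pi * \<i> * of_int k * z + 2 * pi * \<i> * of_int (-k)"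
    by (simp add: algebra_simps)
  show ?thesis unfolding P e0 exp_add exp_2pi_int by simp
qed

lemma mod_holo: "F holomorphic_on UNIV \<Longrightarrow> (\<lambda>z. F z * exp (- 2 * pi * \<i> * of_int k * z)) holomorphic_on UNIV"
  by (intro holomorphic_intros)

lemma coef_any:
  assumes H: "F holomorphic_on UNIV" and P: "\<And>z. F (z + 1) = F z"
  shows "contour_integral (linepath w (w + 1)) (\<lambda>z. F z * exp (- 2 * pi * \<i> * of_int k * z)) = coef F k"
  unfolding coef_def by (rule per1[OF mod_holo[OF H] mod_per[of F, OF P]])

lemma coef_shift:
  assumes H: "F holomorphic_on UNIV" and P: "\<And>z. F (z + 1) = F z"
    and Q: "\<And>z. Im z = y0 \<Longrightarrow> F (z + t) = exp (- pi * \<i> * t - 2 * pi * \<i> * z) * F z"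
  shows "coef F (n + 1) = exp (pi * \<i> * t * (2 * of_int n + 1)) * coef F n"
proof -
  define c where "c = exp (- pi * \<i> * t * (2 * of_int n + 1))"
  let ?h = "\<lambda>k z. F z * exp (- 2 * pi * \<i> * of_int k * z)"
  have "coef F n = contour_integral (linepath (\<i> * y0 + t) (\<i> * y0 + t + 1)) (?h n)"
    using coef_any[OF H P, of "\<i> * y0 + t" n] by simp
  also have "\<dots> = contour_integral (linepath (\<i> * y0 + t) ((\<i> * y0 + 1) + t)) (?h n)"
    by (simp add: algebra_simps)
  also have "\<dots> = contour_integral (linepath (\<i> * y0) (\<i> * y0 + 1)) (\<lambda>z. ?h n (z + t))"
    by (rule trans_int)
  also have "\<dots> = contour_integral (linepath (\<i> * y0) (\<i> * y0 + 1)) (\<lambda>z. c * ?h (n + 1) z)"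
  proof (rule contour_integral_cong)
    fix z assume "z \<in> path_image (linepath (\<i> * y0) (\<i> * y0 + 1))"
    then have "Im z = y0" by (auto simp: closed_segment_def algebra_simps)
    then have "?h n (z + t) = exp (- pi * \<i> * t - 2 * pi * \<i> * z) * F z * exp (- 2 * pi * \<i> * of_int n * (z + t))"
      using Q by simp
    also have "\<dots> = F z * (exp (- pi * \<i> * t - 2 * pi * \<i> * z) * exp (- 2 * pi * \<i> * of_int n * (z + t)))"
      by (simp add: algebra_simps)
    also have "exp (- pi * \<i> * t - 2 * pi * \<i> * z) * exp (- 2 * pi * \<i> * of_int n * (z + t))
        = exp (- pi * \<i> * t * (2 * of_int n + 1) + (- 2 * pi * \<i> * of_int (n + 1) * z))"
      unfolding mult_exp_exp by (simp add: algebra_simps)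
    also have "\<dots> = c * exp (- 2 * pi * \<i> * of_int (n + 1) * z)"
      unfolding c_def mult_exp_exp by simp
    finally show "?h n (z + t) = c * ?h (n + 1) z" by (simp add: algebra_simps)
  qed simp
  also have "\<dots> = c * contour_integral (linepath (\<i> * y0) (\<i> * y0 + 1)) (?h (n + 1))"
    by (rule contour_integral_lmul[OF holo_integrable[OF mod_holo[OF H]]])
  also have "\<dots> = c * coef F (n + 1)"
    using coef_any[OF H P, of "\<i> * y0" "n + 1"] by simp
  finally have "coef F n = c * coef F (n + 1)" .
  then have "exp (pi * \<i> * t * (2 * of_int n + 1)) * coef F n = exp (pi * \<i> * t * (2 * of_int n + 1)) * c * coef F (n + 1)"
    by simp
  also have "exp (pi * \<i> * t * (2 * of_int n + 1)) * c = 1"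
    unfolding c_def mult_exp_exp by simp
  finally show ?thesis by simp
qed

lemma coef_closed:
  assumes H: "F holomorphic_on UNIV" and P: "\<And>z. F (z + 1) = F z"
    and Q: "\<And>z. Im z = y0 \<Longrightarrow> F (z + t) = exp (- pi * \<i> * t - 2 * pi * \<i> * z) * F z"
  shows "coef F n = exp (pi * \<i> * t * (of_int n)^2) * coef F 0"
proof (induct n rule: int_induct[where k=0])
  case base then show ?case by simp
next
  case (step1 i)
  have "coef F (i + 1) = exp (pi * \<i> * t * (2 * of_int i + 1)) * (exp (pi * \<i> * t * (of_int i)^2) * coef F 0)"
    using coef_shift[OF H P Q, where n=i] step1(2) by simp
  also have "\<dots> = exp (pi * \<i> * t * (of_int (i + 1))^2) * coef F 0"
    unfolding mult.assoc[symmetric] mult_exp_exp by (simp add: power2_eq_square algebra_simps)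
  finally show ?case .
next
  case (step2 i)
  have "coef F i = exp (pi * \<i> * t * (2 * of_int (i - 1) + 1)) * coef F (i - 1)"
    using coef_shift[OF H P Q, where n="i - 1"] by simp
  then have "exp (- (pi * \<i> * t * (2 * of_int (i - 1) + 1))) * coef F i =
     (exp (- (pi * \<i> * t * (2 * of_int (i - 1) + 1))) * exp (pi * \<i> * t * (2 * of_int (i - 1) + 1))) * coef F (i - 1)"
    by simp
  also have "exp (- (pi * \<i> * t * (2 * of_int (i - 1) + 1))) * exp (pi * \<i> * t * (2 * of_int (i - 1) + 1)) = 1"
    unfolding mult_exp_exp by simp
  finally have "coef F (i - 1) = exp (- (pi * \<i> * t * (2 * of_int (i - 1) + 1))) * coef F i"
    by simp
  also have "\<dots> = exp (- (pi * \<i> * t * (2 * of_int (i - 1) + 1))) * (exp (pi * \<i> * t * (of_int i)^2) * coef F 0)"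
    using step2(2) by simp
  also have "\<dots> = exp (pi * \<i> * t * (of_int (i - 1))^2) * coef F 0"
    unfolding mult.assoc[symmetric] mult_exp_exp by (simp add: power2_eq_square algebra_simps)
  finally show ?case .
qed

lemma small_zero:
  fixes x :: complex and M \<rho> :: real
  assumes b: "\<And>N::nat. norm x \<le> M * \<rho> ^ N" and r: "0 \<le> \<rho>" "\<rho> < 1"
  shows "x = 0"
proof (rule ccontr)
  assume "x \<noteq> 0"
  then have nx: "norm x > 0" by simp
  have "norm x \<le> M" using b[of 0] by simp
  with nx have M: "M > 0" by linarith
  obtain n where n: "\<rho> ^ n < norm x / M"
    using real_arch_pow_inv[of "norm x / M" \<rho>] nx M r by auto
  have "M * \<rho> ^ n < norm x" using n M by (simp add: field_simps)
  with b[of n] show False by simp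
qed

lemma seg_vanish:
  fixes \<Phi> r :: "complex \<Rightarrow> complex"
  assumes cont: "continuous_on (closed_segment w (w+1)) \<Phi>"
    and cr: "continuous_on (closed_segment w (w+1)) r"
    and rb: "\<And>z. z \<in> closed_segment w (w+1) \<Longrightarrow> norm (r z) = \<rho>"
    and \<rho>: "0 \<le> \<rho>" "\<rho> < 1"
    and dec: "\<And>N. \<exists>G. (G has_contour_integral 0) (linepath w (w+1)) \<and>
                  (\<forall>z\<in>closed_segment w (w+1). \<Phi> z = G z + r z ^ N * \<Phi> z)"
  shows "contour_integral (linepath w (w+1)) \<Phi> = 0"
proof -
  have "compact (\<Phi> ` closed_segment w (w+1))"
    by (rule compact_continuous_image[OF cont compact_segment])
  then obtain M where M: "M > 0" "\<And>z. z \<in> closed_segment w (w+1) \<Longrightarrow> norm (\<Phi> z) \<le> M"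
    using compact_imp_bounded bounded_pos by (metis imageI)
  show ?thesis
  proof (rule small_zero[OF _ \<rho>])
    fix N :: nat
    obtain G where G: "(G has_contour_integral 0) (linepath w (w+1))"
      and GG: "\<forall>z\<in>closed_segment w (w+1). \<Phi> z = G z + r z ^ N * \<Phi> z"
      using dec by blast
    have ci: "(\<lambda>z. r z ^ N * \<Phi> z) contour_integrable_on linepath w (w+1)"
      by (intro contour_integrable_continuous_linepath continuous_intros cont cr)
    define I where "I = contour_integral (linepath w (w+1)) (\<lambda>z. r z ^ N * \<Phi> z)"
    have hI: "((\<lambda>z. r z ^ N * \<Phi> z) has_contour_integral I) (linepath w (w+1))"
      unfolding I_def by (rule has_contour_integral_integral[OF ci])
    have "((\<lambda>z. G z + r z ^ N * \<Phi> z) has_contour_integral 0 + I) (linepath w (w+1))"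
      by (rule has_contour_integral_add[OF G hI])
    then have "((\<lambda>z. G z + r z ^ N * \<Phi> z) has_contour_integral I) (linepath w (w+1))"
      by simp
    then have "(\<Phi> has_contour_integral I) (linepath w (w+1))"
      by (rule has_contour_integral_eq) (use GG in auto)
    then have eq: "contour_integral (linepath w (w+1)) \<Phi> = I"
      by (rule contour_integral_unique)
    have "norm I \<le> (M * \<rho> ^ N) * norm ((w + 1) - w)"
    proof (rule has_contour_integral_bound_linepath[OF hI])
      show "0 \<le> M * \<rho> ^ N" using M \<rho> by simp
      fix z assume z: "z \<in> closed_segment w (w + 1)"
      have "norm (r z ^ N * \<Phi> z) = \<rho> ^ N * norm (\<Phi> z)"
        by (simp add: norm_mult norm_power rb[OF z])
      also have "\<dots> \<le> \<rho> ^ N * M" by (rule mult_left_mono[OF M(2)[OF z]]) (use \<rho> in simp)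
      finally show "norm (r z ^ N * \<Phi> z) \<le> M * \<rho> ^ N" by (simp add: mult.commute)
    qed
    then show "norm (contour_integral (linepath w (w+1)) \<Phi>) \<le> M * \<rho> ^ N" by (simp add: eq)
  qed
qed

lemma geo_bottom:
  fixes r H :: complex assumes "r \<noteq> 1"
  shows "H / (1 - r) = (\<Sum>k<N. H * r ^ k) + r ^ N * (H / (1 - r))"
proof -
  have "(\<Sum>k<N. H * r ^ k) = H * ((1 - r ^ N) / (1 - r))"
    using assms by (simp add: sum_distrib_left[symmetric] sum_gp_strict)
  then show ?thesis using assms by (simp add: field_simps)
qed

lemma geo_top:
  fixes s H :: complex assumes "s \<noteq> 1"
  shows "H * s / (s - 1) = - (\<Sum>k<N. H * s ^ Suc k) + s ^ N * (H * s / (s - 1))"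
proof -
  have "(\<Sum>k<N. H * s ^ Suc k) = H * s * ((1 - s ^ N) / (1 - s))"
    using assms by (simp add: sum_distrib_left[symmetric] sum_gp_strict mult.assoc)
  moreover have "s - 1 \<noteq> 0" "1 - s \<noteq> 0" using assms by auto
  ultimately show ?thesis by (simp add: field_simps)
qed

lemma exp_nat_pow: fixes c z :: complex shows "exp (c * of_int (int k) * z) = exp (c * z) ^ k"
proof -
  have "c * of_int (int k) * z = of_nat k * (c * z)" by (simp add: algebra_simps)
  then show ?thesis by (simp only: exp_of_nat_mult)
qed

lemma exp_per: fixes z :: complex shows "exp (2 * of_real pi * \<i> * (z + 1)) = exp (2 * of_real pi * \<i> * z)"
proof -
  have "2 * of_real pi * \<i> * (z + 1) = 2 * of_real pi * \<i> * z + 2 * pi * \<i> * of_int 1" by (simp add: algebra_simps)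
  then show ?thesis by (simp only: exp_add exp_2pi_int mult_1_right)
qed

lemma inversion:
  assumes H: "H holomorphic_on UNIV" and P: "\<And>z. H (z + 1) = H z" and C: "\<And>k. coef H k = 0"
  shows "H z0 = 0"
proof (rule ccontr)
  assume nz: "H z0 \<noteq> 0"
  define u0 where "u0 = exp (2 * pi * \<i> * z0)"
  have u0nz: "u0 \<noteq> 0" by (simp add: u0_def)
  define f where "f = (\<lambda>z. H z * exp (2 * pi * \<i> * z))"
  define g where "g = (\<lambda>z. exp (2 * pi * \<i> * z) - u0)"
  define \<Phi> where "\<Phi> = (\<lambda>z. f z / g z)"
  define a1 where "a1 = Complex (Re z0 - 1/2) (Im z0 - 1)"
  define a3 where "a3 = Complex (Re z0 + 1/2) (Im z0 + 1)"
  define a2 where "a2 = Complex (Re a3) (Im a1)"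
  define a4 where "a4 = Complex (Re a1) (Im a3)"
  have a2e: "a2 = a1 + 1" and a3e: "a3 = a4 + 1" and a4e: "a4 = a1 + 2 * \<i>"
    by (simp_all add: a1_def a2_def a3_def a4_def complex_eq_iff)
  define S where "S = box (Complex (Re z0 - 3/4) (Im z0 - 2)) (Complex (Re z0 + 3/4) (Im z0 + 2))"
  have zeros: "\<exists>n::int. z = z0 + of_int n" if "g z = 0" for z
  proof -
    from that have "exp (2 * pi * \<i> * z) = exp (2 * pi * \<i> * z0)" by (simp add: g_def u0_def)
    then obtain n :: int where "2 * pi * \<i> * z = 2 * pi * \<i> * z0 + complex_of_real (real_of_int (2 * n) * pi) * \<i>"
      unfolding exp_eq by blast
    then have "2 * pi * \<i> * z = 2 * pi * \<i> * (z0 + of_int n)" by (simp add: algebra_simps)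
    then show ?thesis by auto
  qed
  have gnz: "g z \<noteq> 0" if "z \<in> S" "z \<noteq> z0" for z
  proof
    assume "g z = 0"
    then obtain n :: int where n: "z = z0 + of_int n" using zeros by blast
    with that have "\<bar>real_of_int n\<bar> < 3/4" by (auto simp: S_def in_box_complex_iff)
    then have "n = 0" by linarith
    with n that show False by simp
  qed
  have sub: "cbox a1 a3 \<subseteq> S"
    by (auto simp: S_def a1_def a3_def in_box_complex_iff in_cbox_complex_iff)
  have z0b: "z0 \<in> box a1 a3" by (simp add: a1_def a3_def in_box_complex_iff)
  have le: "Re a1 \<le> Re a3" "Im a1 \<le> Im a3" by (simp_all add: a1_def a3_def)
  have pim: "path_image (rectpath a1 a3) \<subseteq> S - {z0}"
    using path_image_rectpath_cbox_minus_box[OF le] sub z0b by auto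
  have holo: "\<Phi> holomorphic_on S - {z0}"
    unfolding \<Phi>_def f_def g_def using gnz[unfolded g_def] by (intro holomorphic_intros H[THEN holomorphic_on_subset]) auto
  have fholo: "f holomorphic_on S" unfolding f_def by (intro holomorphic_intros H[THEN holomorphic_on_subset]) auto
  have gholo: "g holomorphic_on S" unfolding g_def by (intro holomorphic_intros)
  have z0S: "z0 \<in> S" by (simp add: S_def in_box_complex_iff)
  have gd: "(g has_field_derivative (2 * pi * \<i> * u0)) (at z0)"
    unfolding g_def u0_def by (auto intro!: derivative_eq_intros)
  have res: "residue \<Phi> z0 = f z0 / (2 * pi * \<i> * u0)"
    unfolding \<Phi>_def
    by (rule residue_simple_pole_deriv[OF fholo gholo _ _ z0S gd])
       (auto simp: S_def f_def g_def u0_def nz intro: convex_connected)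
  have "contour_integral (rectpath a1 a3) \<Phi> = 2 * pi * \<i> * (\<Sum>p\<in>{z0}. winding_number (rectpath a1 a3) p * residue \<Phi> p)"
  proof (rule Residue_theorem[OF _ _ _ holo])
    show "\<forall>z. z \<notin> S \<longrightarrow> winding_number (rectpath a1 a3) z = 0"
      using winding_number_rectpath_outside[OF le] sub by blast
  qed (use pim in \<open>auto simp: S_def intro: convex_connected\<close>)
  also have "\<dots> = H z0"
    using winding_number_rectpath[OF z0b] u0nz by (simp add: res f_def u0_def)
  finally have total: "contour_integral (rectpath a1 a3) \<Phi> = H z0" .
  have cont: "continuous_on (S - {z0}) \<Phi>" by (rule holomorphic_on_imp_continuous_on[OF holo])
  have pimU: "path_image (rectpath a1 a3) = closed_segment a1 a2 \<union> closed_segment a2 a3 \<union> closed_segment a3 a4 \<union> closed_segment a4 a1"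
    by (simp add: rectpath_def Let_def path_image_join a2_def a4_def Un_assoc)
  have cs: "continuous_on (closed_segment a b) \<Phi>" if "closed_segment a b \<subseteq> path_image (rectpath a1 a3)" for a b
    using cont that pim continuous_on_subset by blast
  have c12: "continuous_on (closed_segment a1 a2) \<Phi>" by (rule cs) (unfold pimU, blast)
  have c23: "continuous_on (closed_segment a2 a3) \<Phi>" by (rule cs) (unfold pimU, blast)
  have c34: "continuous_on (closed_segment a3 a4) \<Phi>" by (rule cs) (unfold pimU, blast)
  have c41: "continuous_on (closed_segment a4 a1) \<Phi>" by (rule cs) (unfold pimU, blast)
  have "contour_integral (rectpath a1 a3) \<Phi> = contour_integral (linepath a1 a2) \<Phi> +
     (contour_integral (linepath a2 a3) \<Phi> + (contour_integral (linepath a3 a4) \<Phi> + contour_integral (linepath a4 a1) \<Phi>))"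
    unfolding rectpath_def Let_def a2_def[symmetric] a4_def[symmetric]
    by (simp add: contour_integral_join contour_integrable_continuous_linepath c12 c23 c34 c41 valid_path_join)
  moreover have "contour_integral (linepath a2 a3) \<Phi> = contour_integral (linepath a1 a4) \<Phi>"
  proof -
    have "contour_integral (linepath a2 a3) \<Phi> = contour_integral (linepath (a1 + 1) (a4 + 1)) \<Phi>"
      by (simp add: a2e a3e)
    also have "\<dots> = contour_integral (linepath a1 a4) (\<lambda>z. \<Phi> (z + 1))" by (rule trans_int)
    also have "(\<lambda>z. \<Phi> (z + 1)) = \<Phi>" by (simp add: \<Phi>_def f_def g_def exp_per P)
    finally show ?thesis .
  qed
  moreover have "contour_integral (linepath a4 a1) \<Phi> = - contour_integral (linepath a1 a4) \<Phi>"
    by (rule contour_integral_reverse_linepath[OF c41])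
  moreover have "contour_integral (linepath a3 a4) \<Phi> = - contour_integral (linepath a4 (a4 + 1)) \<Phi>"
    using contour_integral_reverse_linepath[OF c34] by (simp add: a3e)
  ultimately have tot2: "H z0 = contour_integral (linepath a1 (a1 + 1)) \<Phi> - contour_integral (linepath a4 (a4 + 1)) \<Phi>"
    using total by (simp add: a2e)
  have cb: "continuous_on (closed_segment a1 (a1 + 1)) \<Phi>" using c12 by (simp add: a2e)
  have ct: "continuous_on (closed_segment a4 (a4 + 1)) \<Phi>" using c34 by (simp add: a3e closed_segment_commute)
  have segS: "z \<in> S - {z0}" if "z \<in> closed_segment a1 (a1 + 1) \<or> z \<in> closed_segment a4 (a4 + 1)" for z
  proof -
    have pim2: "closed_segment a1 a2 \<union> closed_segment a2 a3 \<union> closed_segment a3 a4 \<union> closed_segment a4 a1 \<subseteq> S - {z0}"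
      using pim pimU by simp
    have "closed_segment a1 (a1+1) \<subseteq> S - {z0}" using pim2 a2e by auto
    moreover have "closed_segment a4 (a4+1) \<subseteq> S - {z0}"
      using pim2 closed_segment_commute[of a3 a4] unfolding a3e by auto
    ultimately show ?thesis using that by blast
  qed
  have imb: "Im z = Im z0 - 1" if "z \<in> closed_segment a1 (a1 + 1)" for z
    using that by (auto simp: closed_segment_def a1_def algebra_simps)
  have imt: "Im z = Im z0 + 1" if "z \<in> closed_segment a4 (a4 + 1)" for z
    using that by (auto simp: closed_segment_def a4_def a3_def a1_def algebra_simps)
  have coefz: "((\<lambda>z. H z * exp (- 2 * pi * \<i> * of_int k * z)) has_contour_integral 0) (linepath w (w + 1))" for k w
  proof -
    have "((\<lambda>z. H z * exp (- 2 * pi * \<i> * of_int k * z)) has_contour_integral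
       contour_integral (linepath w (w + 1)) (\<lambda>z. H z * exp (- 2 * pi * \<i> * of_int k * z))) (linepath w (w + 1))"
      by (rule has_contour_integral_integral[OF holo_integrable[OF mod_holo[OF H]]])
    then show ?thesis using coef_any[OF H P, of w k] C[of k] by simp
  qed
  have bot: "contour_integral (linepath a1 (a1 + 1)) \<Phi> = 0"
  proof (rule seg_vanish[OF cb, where r = "\<lambda>z. u0 * exp (- 2 * pi * \<i> * z)" and \<rho> = "exp (- 2 * pi)"])
    show "continuous_on (closed_segment a1 (a1 + 1)) (\<lambda>z. u0 * exp (- 2 * pi * \<i> * z))"
      by (intro continuous_intros)
    show "norm (u0 * exp (- 2 * pi * \<i> * z)) = exp (- 2 * pi)" if "z \<in> closed_segment a1 (a1 + 1)" for z
    proof -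
      have i: "Im z = Im z0 - 1" by (rule imb[OF that])
      show ?thesis by (simp add: u0_def norm_mult norm_exp_eq_Re mult_exp_exp i algebra_simps)
    qed
    show "0 \<le> exp (- 2 * pi)" by simp
    show "exp (- 2 * pi) < 1" by simp
    fix N
    define G where "G = (\<lambda>z. \<Sum>k<N. u0 ^ k * (H z * exp (- 2 * pi * \<i> * of_int (int k) * z)))"
    have "(G has_contour_integral (\<Sum>k<N. u0 ^ k * 0)) (linepath a1 (a1 + 1))"
      unfolding G_def by (intro has_contour_integral_sum has_contour_integral_lmul coefz) auto
    moreover have "\<Phi> z = G z + (u0 * exp (- 2 * pi * \<i> * z)) ^ N * \<Phi> z" if "z \<in> closed_segment a1 (a1 + 1)" for z
    proof -
      define e where "e = exp (2 * pi * \<i> * z)"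
      define r where "r = u0 * exp (- 2 * pi * \<i> * z)"
      have enz: "e \<noteq> 0" by (simp add: e_def)
      have ge: "e - u0 \<noteq> 0" using gnz[of z] segS[of z] that by (auto simp: g_def e_def)
      have re: "r = u0 / e" by (simp add: r_def e_def exp_minus field_simps)
      have r1: "r \<noteq> 1" using ge enz by (auto simp: re field_simps)
      have phi0: "\<Phi> z = H z * e / (e - u0)" by (simp add: \<Phi>_def f_def g_def e_def)
      have phi: "\<Phi> z = H z / (1 - r)"
        using enz ge unfolding phi0 re by (simp add: field_simps)
      have ek: "exp (- 2 * pi * \<i> * of_int (int k) * z) = exp (- 2 * pi * \<i> * z) ^ k" for k
      proof -
        have "- 2 * pi * \<i> * of_int (int k) * z = of_nat k * (- 2 * pi * \<i> * z)" by (simp add: algebra_simps)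
        then show ?thesis by (simp only: exp_of_nat_mult)
      qed
      have Gz: "G z = (\<Sum>k<N. H z * r ^ k)"
        unfolding G_def r_def ek
        by (intro sum.cong refl) (simp add: power_mult_distrib)
      show ?thesis unfolding phi Gz r_def[symmetric] by (rule geo_bottom[OF r1])
    qed
    ultimately show "\<exists>G. (G has_contour_integral 0) (linepath a1 (a1 + 1)) \<and>
        (\<forall>z\<in>closed_segment a1 (a1 + 1). \<Phi> z = G z + (u0 * exp (- 2 * pi * \<i> * z)) ^ N * \<Phi> z)"
      by auto
  qed
  have top: "contour_integral (linepath a4 (a4 + 1)) \<Phi> = 0"
  proof (rule seg_vanish[OF ct, where r = "\<lambda>z. exp (2 * pi * \<i> * z) / u0" and \<rho> = "exp (- 2 * pi)"])
    show "continuous_on (closed_segment a4 (a4 + 1)) (\<lambda>z. exp (2 * pi * \<i> * z) / u0)"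
      using u0nz by (intro continuous_intros) auto
    show "norm (exp (2 * pi * \<i> * z) / u0) = exp (- 2 * pi)" if "z \<in> closed_segment a4 (a4 + 1)" for z
    proof -
      have i: "Im z = Im z0 + 1" by (rule imt[OF that])
      show ?thesis by (simp add: u0_def norm_divide norm_exp_eq_Re exp_diff[symmetric] i algebra_simps)
    qed
    show "0 \<le> exp (- 2 * pi)" by simp
    show "exp (- 2 * pi) < 1" by simp
    fix N
    define G where "G = (\<lambda>z. - (\<Sum>k<N. inverse u0 ^ Suc k * (H z * exp (- 2 * pi * \<i> * of_int (- int (Suc k)) * z))))"
    have "(G has_contour_integral - (\<Sum>k<N. inverse u0 ^ Suc k * 0)) (linepath a4 (a4 + 1))"
      unfolding G_def by (intro has_contour_integral_neg has_contour_integral_sum has_contour_integral_lmul coefz) auto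
    moreover have "\<Phi> z = G z + (exp (2 * pi * \<i> * z) / u0) ^ N * \<Phi> z" if "z \<in> closed_segment a4 (a4 + 1)" for z
    proof -
      define e where "e = exp (2 * pi * \<i> * z)"
      define s where "s = e / u0"
      have enz: "e \<noteq> 0" by (simp add: e_def)
      have ge: "e - u0 \<noteq> 0" using gnz[of z] segS[of z] that by (auto simp: g_def e_def)
      have s1: "s \<noteq> 1" using ge u0nz by (auto simp: s_def field_simps)
      have phi0: "\<Phi> z = H z * e / (e - u0)" by (simp add: \<Phi>_def f_def g_def e_def)
      have phi: "\<Phi> z = H z * s / (s - 1)"
        using u0nz ge unfolding phi0 s_def by (simp add: field_simps)
      have ek: "exp (- 2 * pi * \<i> * of_int (- int (Suc k)) * z) = e ^ Suc k" for k
      proof -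
        have "exp (- 2 * pi * \<i> * of_int (- int (Suc k)) * z) = exp ((2 * pi * \<i>) * of_int (int (Suc k)) * z)"
          by (simp add: algebra_simps)
        also have "\<dots> = e ^ Suc k" unfolding exp_nat_pow e_def by (simp add: mult.assoc)
        finally show ?thesis .
      qed
      have Gz: "G z = - (\<Sum>k<N. H z * s ^ Suc k)"
        unfolding G_def ek s_def
        by (intro arg_cong[where f=uminus] sum.cong refl) (simp add: power_divide field_simps)
      show ?thesis unfolding phi Gz e_def[symmetric] s_def[symmetric] by (rule geo_top[OF s1])
    qed
    ultimately show "\<exists>G. (G has_contour_integral 0) (linepath a4 (a4 + 1)) \<and>
        (\<forall>z\<in>closed_segment a4 (a4 + 1). \<Phi> z = G z + (exp (2 * pi * \<i> * z) / u0) ^ N * \<Phi> z)"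
      by auto
  qed
  from tot2 bot top nz show False by simp
qed

lemma ci_lin:
  assumes f: "f holomorphic_on UNIV" and g: "g holomorphic_on UNIV" and e: "e holomorphic_on UNIV"
  shows "contour_integral (linepath 0 1) (\<lambda>z. (f z - c * g z) * e z) =
         contour_integral (linepath 0 1) (\<lambda>z. f z * e z) - c * contour_integral (linepath 0 1) (\<lambda>z. g z * e z)"
proof -
  have i1: "(\<lambda>z. f z * e z) contour_integrable_on linepath 0 1"
    by (rule holo_integrable) (intro holomorphic_intros f e)
  have i2: "(\<lambda>z. g z * e z) contour_integrable_on linepath 0 1"
    by (rule holo_integrable) (intro holomorphic_intros g e)
  have i3: "(\<lambda>z. c * (g z * e z)) contour_integrable_on linepath 0 1"
    by (rule contour_integrable_lmul[OF i2])
  have "contour_integral (linepath 0 1) (\<lambda>z. (f z - c * g z) * e z) =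
        contour_integral (linepath 0 1) (\<lambda>z. f z * e z - c * (g z * e z))"
    by (simp add: algebra_simps)
  also have "\<dots> = contour_integral (linepath 0 1) (\<lambda>z. f z * e z) - contour_integral (linepath 0 1) (\<lambda>z. c * (g z * e z))"
    by (rule contour_integral_diff[OF i1 i3])
  also have "contour_integral (linepath 0 1) (\<lambda>z. c * (g z * e z)) = c * contour_integral (linepath 0 1) (\<lambda>z. g z * e z)"
    by (rule contour_integral_lmul[OF i2])
  finally show ?thesis .
qed

lemma coef_lin:
  assumes "F holomorphic_on UNIV" "G holomorphic_on UNIV"
  shows "coef (\<lambda>z. F z - c * G z) k = coef F k - c * coef G k"
  unfolding coef_def by (rule ci_lin[OF assms]) (intro holomorphic_intros)

lemma theta3_coef: assumes t: "Im t > 0"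
  shows "coef (\<lambda>z. theta3 z t) k = exp (pi * \<i> * t * (of_int k)^2)"
proof -
  have "coef (\<lambda>z. theta3 z t) 0 = 1" using theta3_integral[OF t] by (simp add: coef_def)
  moreover have "coef (\<lambda>z. theta3 z t) k = exp (pi * \<i> * t * (of_int k)^2) * coef (\<lambda>z. theta3 z t) 0"
    by (rule coef_closed[OF theta3_holo[OF t] theta3_period theta3_quasi[OF t]])
  ultimately show ?thesis by simp
qed

lemma uniq:
  assumes t: "Im t > 0" and H: "F holomorphic_on UNIV" and P: "\<And>z. F (z + 1) = F z"
    and Q: "\<And>z. Im z = y0 \<Longrightarrow> F (z + t) = exp (- pi * \<i> * t - 2 * pi * \<i> * z) * F z"
  shows "F z = coef F 0 * theta3 z t"
proof -
  define G where "G = (\<lambda>z. F z - coef F 0 * theta3 z t)"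
  have GH: "G holomorphic_on UNIV" unfolding G_def by (intro holomorphic_intros H theta3_holo[OF t])
  have GP: "G (z + 1) = G z" for z by (simp add: G_def P theta3_period)
  have "coef G k = 0" for k
  proof -
    have cF: "coef F k = exp (pi * \<i> * t * (of_int k)^2) * coef F 0" by (rule coef_closed[OF H P Q])
    show ?thesis unfolding G_def coef_lin[OF H theta3_holo[OF t]] theta3_coef[OF t] cF by simp
  qed
  then show ?thesis using inversion[OF GH GP, of z] by (simp add: G_def)
qed



lemma Im_inv_neg: assumes "Im t > 0" shows "Im (- 1 / t) > 0"
proof -
  have "t \<noteq> 0" using assms by auto
  then have "Im (- 1 / t) = Im t / (norm t)^2"
    by (simp add: Im_divide cmod_def power2_eq_square)
  then show ?thesis using assms \<open>t \<noteq> 0\<close> by simp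
qed

lemma theta3_back: assumes "Im T > 0"
  shows "theta3 (w - T) T = exp (- pi * \<i> * T + 2 * pi * \<i> * w) * theta3 w T"
proof -
  have "theta3 w T = theta3 ((w - T) + T) T" by simp
  also have "\<dots> = exp (- pi * \<i> * T - 2 * pi * \<i> * (w - T)) * theta3 (w - T) T"
    by (rule theta3_quasi[OF assms])
  finally have e: "theta3 w T = exp (- pi * \<i> * T - 2 * pi * \<i> * (w - T)) * theta3 (w - T) T" .
  have "exp (- pi * \<i> * T + 2 * pi * \<i> * w) * theta3 w T =
        (exp (- pi * \<i> * T + 2 * pi * \<i> * w) * exp (- pi * \<i> * T - 2 * pi * \<i> * (w - T))) * theta3 (w - T) T"
    by (simp add: e)
  also have "exp (- pi * \<i> * T + 2 * pi * \<i> * w) * exp (- pi * \<i> * T - 2 * pi * \<i> * (w - T)) = 1"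
    unfolding mult_exp_exp by (simp add: algebra_simps)
  finally show ?thesis by simp
qed

lemma theta2_0: assumes t: "Im t > 0"
  shows "theta2 0 t = exp (pi * \<i> * t / 4) * theta3 (t / 2) t"
proof -
  have e: "exp (pi * \<i> * t * (of_int n + 1/2)^2) * exp (pi * \<i> * 0 * (2 * of_int n + 1)) =
        exp (pi * \<i> * t / 4) * tt t (t / 2) n" for n
    unfolding tt_def mult_exp_exp by (simp add: power2_eq_square algebra_simps)
  have "((\<lambda>n. exp (pi * \<i> * t / 4) * tt t (t / 2) n) has_sum exp (pi * \<i> * t / 4) * theta3 (t / 2) t) UNIV"
    by (rule has_sum_cmult_right[OF theta3_has_sum[OF t]])
  then show ?thesis unfolding theta2_def e[symmetric] by (rule infsumI)
qed

lemma modular: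
  assumes t: "Im t > 0"
  shows "theta3 0 (- 1 / t) * theta2 0 t = theta3 (1/2) (- 1 / t) * theta3 0 t"
proof -
  define T where "T = - 1 / t"
  have T: "Im T > 0" unfolding T_def by (rule Im_inv_neg[OF t])
  have tnz: "t \<noteq> 0" using t by auto
  define F where "F = (\<lambda>z. exp (- pi * \<i> * z^2 / t) * theta3 (z / t) T)"
  have FH: "F holomorphic_on UNIV"
  proof -
    have "(\<lambda>z. theta3 (z / t) T) holomorphic_on UNIV"
    proof -
      have a: "(\<lambda>z. z / t) holomorphic_on UNIV" using tnz by (intro holomorphic_intros) auto
      have b: "(\<lambda>w. theta3 w T) holomorphic_on range (\<lambda>z. z / t)"
        by (rule holomorphic_on_subset[OF theta3_holo[OF T]]) auto
      show ?thesis using holomorphic_on_compose[OF a b] by (simp add: o_def)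
    qed
    then show ?thesis unfolding F_def by (intro holomorphic_intros) (use tnz in auto)
  qed
  have FP: "F (z + 1) = F z" for z
  proof -
    have "theta3 ((z + 1) / t) T = theta3 (z / t - T) T"
      by (simp add: T_def add_divide_distrib)
    also have "\<dots> = exp (- pi * \<i> * T + 2 * pi * \<i> * (z / t)) * theta3 (z / t) T"
      by (rule theta3_back[OF T])
    finally have e: "theta3 ((z + 1) / t) T = exp (- pi * \<i> * T + 2 * pi * \<i> * (z / t)) * theta3 (z / t) T" .
    have "exp (- pi * \<i> * (z + 1)^2 / t) * exp (- pi * \<i> * T + 2 * pi * \<i> * (z / t)) = exp (- pi * \<i> * z^2 / t)"
      unfolding mult_exp_exp T_def using tnz by (simp add: power2_eq_square field_simps)
    then show ?thesis unfolding F_def e by (simp add: mult.assoc[symmetric])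
  qed
  have FQ: "F (z + t) = exp (- pi * \<i> * t - 2 * pi * \<i> * z) * F z" for z
  proof -
    have e: "theta3 ((z + t) / t) T = theta3 (z / t) T"
      using tnz theta3_period[of "z / t" T] by (simp add: add_divide_distrib)
    have "exp (- pi * \<i> * (z + t)^2 / t) = exp (- pi * \<i> * t - 2 * pi * \<i> * z) * exp (- pi * \<i> * z^2 / t)"
      unfolding mult_exp_exp using tnz by (simp add: power2_eq_square field_simps)
    then show ?thesis unfolding F_def e by simp
  qed
  have U: "F z = coef F 0 * theta3 z t" for z
    by (rule uniq[OF t FH FP FQ])
  have "F 0 * theta3 (t / 2) t = F (t / 2) * theta3 0 t"
    using U[of 0] U[of "t/2"] by simp
  moreover have "F 0 = theta3 0 T" by (simp add: F_def)
  moreover have "F (t / 2) = exp (- pi * \<i> * t / 4) * theta3 (1/2) T"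
    unfolding F_def using tnz by (simp add: power2_eq_square mult.assoc)
  ultimately have "theta3 0 T * theta3 (t / 2) t = exp (- pi * \<i> * t / 4) * theta3 (1/2) T * theta3 0 t"
    by simp
  then have "exp (pi * \<i> * t / 4) * (theta3 0 T * theta3 (t / 2) t) =
     (exp (pi * \<i> * t / 4) * exp (- pi * \<i> * t / 4)) * theta3 (1/2) T * theta3 0 t"
    by simp
  also have "exp (pi * \<i> * t / 4) * exp (- pi * \<i> * t / 4) = 1"
    unfolding mult_exp_exp by simp
  finally show ?thesis unfolding theta2_0[OF t] T_def by (simp add: algebra_simps)
qed

definition aa :: "complex \<Rightarrow> int \<Rightarrow> complex" where
  "aa s n = exp (pi * \<i> * s * (2 * of_int n + 1))"

definition fac :: "complex \<Rightarrow> nat \<Rightarrow> complex \<Rightarrow> complex" where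
  "fac s n z = (1 + aa s (int n) * exp (2 * pi * \<i> * z)) * (1 + aa s (int n) * exp (- (2 * pi * \<i> * z)))"

definition PP :: "complex \<Rightarrow> complex \<Rightarrow> complex" where
  "PP s z = (\<Prod>n. fac s n z)"

lemma norm_aa: "norm (aa s n) = exp (- pi * Im s * (2 * of_int n + 1))"
  by (simp add: aa_def norm_exp_eq_Re algebra_simps)

lemma aa_nat_bound: assumes s: "Im s > 0" shows "norm (aa s (int n)) \<le> exp (- 2 * pi * Im s) ^ n"
proof -
  have "norm (aa s (int n)) = exp (- pi * Im s) * exp (- 2 * pi * Im s * of_nat n)"
    by (simp add: norm_aa mult_exp_exp algebra_simps)
  also have "\<dots> \<le> 1 * exp (- 2 * pi * Im s * of_nat n)"
    using s by (intro mult_right_mono) auto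
  also have "exp (- 2 * pi * Im s * of_nat n) = exp (- 2 * pi * Im s) ^ n"
    by (simp add: exp_of_nat_mult[symmetric] mult.commute)
  finally show ?thesis by simp
qed

lemma aa_lt1: assumes s: "Im s > 0" shows "norm (aa s (int n)) < 1"
proof -
  have "- pi * Im s * (2 * of_int (int n) + 1) < 0"
    using s by (intro mult_neg_pos) auto
  then show ?thesis by (simp add: norm_aa)
qed

lemma fac_bound:
  assumes s: "Im s > 0" and z: "\<bar>Im z\<bar> \<le> R"
  shows "norm (fac s n z - 1) \<le> exp (- 2 * pi * Im s) ^ n * (2 * exp (2 * pi * R) + 1)"
proof -
  define a where "a = aa s (int n)"
  define w where "w = exp (2 * pi * \<i> * z)"
  define v where "v = exp (- (2 * pi * \<i> * z))"
  have fe: "fac s n z - 1 = a * (w + v + a * (w * v))"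
    by (simp add: fac_def a_def w_def v_def algebra_simps)
  have na: "norm a \<le> exp (- 2 * pi * Im s) ^ n" "norm a \<le> 1"
    using aa_nat_bound[OF s, of n] aa_lt1[OF s, of n] by (auto simp: a_def)
  have wv: "w * v = 1" by (simp add: w_def v_def mult_exp_exp)
  have i1: "2 * pi * (- Im z) \<le> 2 * pi * R" by (intro mult_left_mono) (use z in auto)
  have i2: "2 * pi * Im z \<le> 2 * pi * R" by (intro mult_left_mono) (use z in auto)
  have nw: "norm w \<le> exp (2 * pi * R)"
    using i1 by (simp add: w_def norm_exp_eq_Re)
  have nv: "norm v \<le> exp (2 * pi * R)"
    using i2 by (simp add: v_def norm_exp_eq_Re)
  have "norm (w + v + a * (w * v)) \<le> norm w + norm v + norm a"
    unfolding wv using norm_triangle_ineq[of "w + v" a] norm_triangle_ineq[of w v] by simp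
  also have "\<dots> \<le> 2 * exp (2 * pi * R) + 1" using nw nv na by simp
  finally have n2: "norm (w + v + a * (w * v)) \<le> 2 * exp (2 * pi * R) + 1" .
  have "norm (fac s n z - 1) = norm a * norm (w + v + a * (w * v))" by (simp add: fe norm_mult)
  also have "\<dots> \<le> exp (- 2 * pi * Im s) ^ n * (2 * exp (2 * pi * R) + 1)"
    by (intro mult_mono na(1) n2) auto
  finally show ?thesis .
qed

lemma fac_summable:
  assumes s: "Im s > 0"
  shows "summable (\<lambda>n. exp (- 2 * pi * Im s) ^ n * (2 * exp (2 * pi * R) + 1))"
  by (intro summable_mult2 summable_geometric) (use s in auto)

lemma fac_conv: assumes s: "Im s > 0" shows "convergent_prod (\<lambda>n. fac s n z)"
proof -
  have "summable (\<lambda>n. norm (fac s n z - 1))"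
    by (rule summable_comparison_test'[OF fac_summable[OF s, of "\<bar>Im z\<bar>"]])
       (use fac_bound[OF s] in auto)
  then show ?thesis
    by (intro abs_convergent_prod_imp_convergent_prod summable_imp_abs_convergent_prod)
qed

lemma prod_lim: fixes f :: "nat \<Rightarrow> complex" assumes "convergent_prod f"
  shows "(\<lambda>N. \<Prod>n<N. f n) \<longlonglongrightarrow> prodinf f"
proof -
  have "(\<lambda>N. \<Prod>n<Suc N. f n) \<longlonglongrightarrow> prodinf f"
    using convergent_prod_LIMSEQ[OF assms] by (simp add: lessThan_Suc_atMost)
  then show ?thesis by (rule LIMSEQ_imp_Suc)
qed

lemma fac_holo: "(\<lambda>z. fac s n z) holomorphic_on UNIV"
  unfolding fac_def by (intro holomorphic_intros)

lemma PP_holo: assumes s: "Im s > 0" shows "PP s holomorphic_on UNIV"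
proof (rule holomorphic_uniform_sequence[where f = "\<lambda>N z. \<Prod>n<N. fac s n z"])
  fix N show "(\<lambda>z. \<Prod>n<N. fac s n z) holomorphic_on UNIV"
    by (intro holomorphic_on_prod fac_holo)
next
  fix x :: complex
  define A where "A = cball x 1"
  have sub: "A \<subseteq> {z. \<bar>Im z\<bar> \<le> \<bar>Im x\<bar> + 1}"
  proof
    fix z assume "z \<in> A"
    then have "norm (z - x) \<le> 1" by (simp add: A_def dist_norm norm_minus_commute)
    moreover have "\<bar>Im (z - x)\<bar> \<le> norm (z - x)" by (rule abs_Im_le_cmod)
    ultimately show "z \<in> {z. \<bar>Im z\<bar> \<le> \<bar>Im x\<bar> + 1}" by auto
  qed
  have uc: "uniformly_convergent_on A (\<lambda>N z. \<Sum>n<N. norm (fac s n z - 1))"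
    by (rule Weierstrass_m_test'[OF _ fac_summable[OF s, of "\<bar>Im x\<bar> + 1"]])
       (use fac_bound[OF s] sub in auto)
  have "uniformly_convergent_on A (\<lambda>N z. \<Prod>n<N. fac s n z)"
    by (rule uniformly_convergent_on_prod'[OF _ _ uc])
       (auto simp: A_def intro!: holomorphic_on_imp_continuous_on[OF holomorphic_on_subset[OF fac_holo]])
  then obtain l where l: "uniform_limit A (\<lambda>N z. \<Prod>n<N. fac s n z) l sequentially"
    by (auto simp: uniformly_convergent_on_def)
  have eq: "l z = PP s z" if "z \<in> A" for z
  proof -
    have "(\<lambda>N. \<Prod>n<N. fac s n z) \<longlonglongrightarrow> l z" by (rule tendsto_uniform_limitI[OF l that])
    moreover have "(\<lambda>N. \<Prod>n<N. fac s n z) \<longlonglongrightarrow> PP s z"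
      unfolding PP_def by (rule prod_lim[OF fac_conv[OF s]])
    ultimately show "l z = PP s z" by (rule LIMSEQ_unique)
  qed
  have "uniform_limit A (\<lambda>N z. \<Prod>n<N. fac s n z) (PP s) sequentially =
        uniform_limit A (\<lambda>N z. \<Prod>n<N. fac s n z) l sequentially"
    by (rule uniform_limit_cong) (auto simp: eq)
  with l have "uniform_limit A (\<lambda>N z. \<Prod>n<N. fac s n z) (PP s) sequentially" by simp
  then show "\<exists>d>0. cball x d \<subseteq> UNIV \<and> uniform_limit (cball x d) (\<lambda>N z. \<Prod>n<N. fac s n z) (PP s) sequentially"
    by (intro exI[of _ 1]) (auto simp: A_def)
qed auto

lemma fac_period: "fac s n (z + 1) = fac s n z"
proof -
  have e1: "exp (2 * pi * \<i> * (z + 1)) = exp (2 * pi * \<i> * z)"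
    by (simp add: distrib_left exp_add)
  have e2: "exp (- (2 * pi * \<i> * (z + 1))) = exp (- (2 * pi * \<i> * z))"
    by (simp only: exp_minus e1)
  show ?thesis unfolding fac_def e1 e2 ..
qed

lemma PP_period: "PP s (z + 1) = PP s z"
  by (simp add: PP_def fac_period)

lemma aa_shift: "aa s (n + 1) = aa s n * exp (2 * pi * \<i> * s)"
  unfolding aa_def mult_exp_exp by (simp add: algebra_simps)

lemma aa_lim: assumes s: "Im s > 0" shows "(\<lambda>N. aa s (int N)) \<longlonglongrightarrow> 0"
proof (rule Lim_null_comparison[OF _ LIMSEQ_power_zero])
  show "\<forall>\<^sub>F N in sequentially. norm (aa s (int N)) \<le> exp (- 2 * pi * Im s) ^ N"
    using aa_nat_bound[OF s] by auto
  show "norm (exp (- 2 * pi * Im s)) < 1" using s by simp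
qed

lemma PP_quasi:
  assumes s: "Im s > 0" and z: "Im z = 0"
  shows "PP s (z + s) = exp (- pi * \<i> * s - 2 * pi * \<i> * z) * PP s z"
proof -
  define w where "w = exp (2 * pi * \<i> * z)"
  define x2 where "x2 = exp (2 * pi * \<i> * s)"
  define A where "A = (\<lambda>n. 1 + aa s n * w)"
  define B where "B = (\<lambda>n. 1 + aa s n / w)"
  have wnz: "w \<noteq> 0" by (simp add: w_def)
  have x2nz: "x2 \<noteq> 0" by (simp add: x2_def)
  have fz: "fac s n z = A (int n) * B (int n)" for n
    by (simp add: fac_def A_def B_def w_def exp_minus divide_inverse)
  have fq: "fac s n (z + s) = A (int n + 1) * B (int n - 1)" for n
  proof -
    have ew: "exp (2 * pi * \<i> * (z + s)) = w * x2" by (simp add: w_def x2_def distrib_left exp_add)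
    have "aa s (int n) = aa s (int n - 1) * x2" using aa_shift[of s "int n - 1"] by (simp add: x2_def)
    then have b: "aa s (int n) * inverse (w * x2) = aa s (int n - 1) / w"
      using x2nz wnz by (simp add: field_simps)
    have a: "aa s (int n) * (w * x2) = aa s (int n + 1) * w"
      using aa_shift[of s "int n"] by (simp add: x2_def algebra_simps)
    show ?thesis unfolding fac_def exp_minus ew A_def B_def a b ..
  qed
  have fin: "A 0 * (\<Prod>n<Suc N. fac s n (z + s)) * B (int N) = A (int N + 1) * B (-1) * (\<Prod>n<Suc N. fac s n z)" for N
  proof (induct N)
    case 0 show ?case by (simp add: fq fz mult_ac)
  next
    case (Suc N)
    have "A 0 * (\<Prod>n<Suc (Suc N). fac s n (z + s)) * B (int (Suc N)) =
          (A 0 * (\<Prod>n<Suc N. fac s n (z + s)) * B (int N)) * (A (int (Suc N) + 1) * B (int (Suc N)))"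
      by (simp add: fq mult_ac)
    also have "\<dots> = (A (int N + 1) * B (-1) * (\<Prod>n<Suc N. fac s n z)) * (A (int (Suc N) + 1) * B (int (Suc N)))"
      by (simp only: Suc)
    also have "\<dots> = A (int (Suc N) + 1) * B (-1) * (\<Prod>n<Suc (Suc N). fac s n z)"
      by (simp add: fz mult_ac add_ac)
    finally show ?case .
  qed
  have l1: "(\<lambda>N. \<Prod>n<Suc N. fac s n (z + s)) \<longlonglongrightarrow> PP s (z + s)"
    unfolding PP_def by (rule LIMSEQ_Suc[OF prod_lim[OF fac_conv[OF s]]])
  have l2: "(\<lambda>N. \<Prod>n<Suc N. fac s n z) \<longlonglongrightarrow> PP s z"
    unfolding PP_def by (rule LIMSEQ_Suc[OF prod_lim[OF fac_conv[OF s]]])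
  have la: "(\<lambda>N. aa s (int N + 1)) \<longlonglongrightarrow> 0"
    using LIMSEQ_Suc[OF aa_lim[OF s]] by (simp add: add.commute)
  have lB: "(\<lambda>N. B (int N)) \<longlonglongrightarrow> 1"
    unfolding B_def using tendsto_add[OF tendsto_const tendsto_divide[OF aa_lim[OF s] tendsto_const[of w]]] wnz by simp
  have lA: "(\<lambda>N. A (int N + 1)) \<longlonglongrightarrow> 1"
    unfolding A_def using tendsto_add[OF tendsto_const tendsto_mult[OF la tendsto_const[of w]]] by simp
  have "(\<lambda>N. A 0 * (\<Prod>n<Suc N. fac s n (z + s)) * B (int N)) \<longlonglongrightarrow> A 0 * PP s (z + s) * 1"
    by (intro tendsto_mult tendsto_const l1 lB)
  moreover have "(\<lambda>N. A 0 * (\<Prod>n<Suc N. fac s n (z + s)) * B (int N)) \<longlonglongrightarrow> 1 * B (-1) * PP s z"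
    unfolding fin by (intro tendsto_mult tendsto_const l2 lA)
  ultimately have key: "A 0 * PP s (z + s) = B (-1) * PP s z"
    using LIMSEQ_unique by fastforce
  define x where "x = exp (pi * \<i> * s)"
  have xnz: "x \<noteq> 0" by (simp add: x_def)
  have a0: "aa s 0 = x" by (simp add: aa_def x_def)
  have am1: "aa s (-1) = inverse x" by (simp add: aa_def x_def exp_minus[symmetric])
  have nw: "norm w = 1" using z by (simp add: w_def norm_exp_eq_Re)
  have A0: "A 0 \<noteq> 0"
  proof
    assume "A 0 = 0"
    then have "aa s 0 * w = -1" by (simp add: A_def add_eq_0_iff)
    then have "norm (aa s 0) = 1" using nw by (metis norm_minus_cancel norm_mult norm_one mult_1_right)
    with aa_lt1[OF s, of 0] show False by simp
  qed
  have BA: "B (-1) = A 0 / (x * w)"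
    using xnz wnz by (simp add: A_def B_def a0 am1 field_simps)
  have "A 0 * PP s (z + s) = A 0 * (PP s z / (x * w))"
    using key unfolding BA by simp
  then have "PP s (z + s) = PP s z / (x * w)"
    using A0 mult_left_cancel by blast
  also have "1 / (x * w) = exp (- pi * \<i> * s - 2 * pi * \<i> * z)"
    by (simp add: x_def w_def exp_diff exp_minus[symmetric] divide_inverse mult_exp_exp[symmetric] algebra_simps)
  ultimately show ?thesis by (simp add: divide_inverse)
qed

lemma PP_uniq: assumes s: "Im s > 0" shows "PP s z = coef (PP s) 0 * theta3 z s"
  by (rule uniq[OF s PP_holo[OF s] PP_period PP_quasi[OF s]])

lemma one_plus_aa_nz: assumes s: "Im s > 0" and that: "norm c = 1" shows "1 + c * aa s (int n) \<noteq> 0"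
proof
  assume "1 + c * aa s (int n) = 0"
  then have "c * aa s (int n) = -1" by (simp add: add_eq_0_iff)
  then have "norm (aa s (int n)) = 1" using that by (metis norm_minus_cancel norm_mult norm_one mult_1_left)
  with aa_lt1[OF s, of n] show False by simp
qed

lemma fac_0: "fac s n 0 = (1 + aa s (int n)) * (1 + aa s (int n))"
  by (simp add: fac_def)

lemma fac_half: "fac s n (1/2) = (1 - aa s (int n)) * (1 - aa s (int n))"
proof -
  have "exp (2 * pi * \<i> * (1/2)) = -1" by simp
  moreover have "exp (- (2 * pi * \<i> * (1/2))) = -1" by (simp add: exp_minus)
  ultimately show ?thesis by (simp add: fac_def)
qed

lemma PP0_nz: assumes s: "Im s > 0" shows "PP s 0 \<noteq> 0"
  unfolding PP_def
proof (rule prodinf_nonzero[OF fac_conv[OF s]])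
  fix n
  have "1 + 1 * aa s (int n) \<noteq> 0" by (rule one_plus_aa_nz[OF s]) simp
  then show "fac s n 0 \<noteq> 0" by (simp add: fac_0)
qed

lemma theta3_0_nz: assumes s: "Im s > 0" shows "theta3 0 s \<noteq> 0"
  using PP_uniq[OF s, of 0] PP0_nz[OF s] by auto

lemma prod_rel: assumes s: "Im s > 0"
  shows "PP s (1/2) * theta3 0 s = PP s 0 * theta3 (1/2) s"
  using PP_uniq[OF s, of 0] PP_uniq[OF s, of "1/2"] by simp

lemma conv1: fixes f :: "nat \<Rightarrow> complex"
  assumes "summable (\<lambda>n. norm (f n))" shows "convergent_prod (\<lambda>n. 1 + f n)"
  using assms by (intro abs_convergent_prod_imp_convergent_prod summable_imp_abs_convergent_prod) simp

lemma aa_summable: assumes s: "Im s > 0" shows "summable (\<lambda>n. norm (aa s (int n)))"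
  by (rule summable_comparison_test'[OF summable_geometric[of "exp (- 2 * pi * Im s)"]])
     (use aa_nat_bound[OF s] s in auto)

definition Qp :: "complex \<Rightarrow> complex" where "Qp s = (\<Prod>n. 1 + aa s (int n))"
definition Qm :: "complex \<Rightarrow> complex" where "Qm s = (\<Prod>n. 1 - aa s (int n))"

lemma Qp_conv: "Im s > 0 \<Longrightarrow> convergent_prod (\<lambda>n. 1 + aa s (int n))"
  by (rule conv1[OF aa_summable])

lemma Qm_conv: "Im s > 0 \<Longrightarrow> convergent_prod (\<lambda>n. 1 - aa s (int n))"
  using conv1[of "\<lambda>n. - aa s (int n)"] aa_summable[of s] by simp

lemma PP0_Qp: "Im s > 0 \<Longrightarrow> PP s 0 = Qp s ^ 2"
  unfolding PP_def fac_0 Qp_def power2_eq_square by (rule prodinf_mult[symmetric, OF Qp_conv Qp_conv])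

lemma PPh_Qm: "Im s > 0 \<Longrightarrow> PP s (1/2) = Qm s ^ 2"
  unfolding PP_def fac_half Qm_def power2_eq_square by (rule prodinf_mult[symmetric, OF Qm_conv Qm_conv])

lemma aa_pow: "aa s (int n) = exp (pi * \<i> * s) ^ (2 * n + 1)"
proof -
  have "pi * \<i> * s * (2 * of_int (int n) + 1) = of_nat (2 * n + 1) * (pi * \<i> * s)"
    by (simp add: algebra_simps)
  then show ?thesis unfolding aa_def by (simp only: exp_of_nat_mult)
qed

lemma eps_conv: fixes p :: complex assumes "norm p < 1" shows "convergent_prod (\<lambda>n. 1 + p ^ Suc n)"
proof (rule conv1)
  have "summable (\<lambda>n. norm p ^ n)" using assms by (intro summable_geometric) auto
  then have "summable (\<lambda>n. norm p * norm p ^ n)" by (rule summable_mult)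
  moreover have "(\<lambda>n. norm (p ^ Suc n)) = (\<lambda>n. norm p * norm p ^ n)" by (simp add: norm_power norm_mult)
  ultimately show "summable (\<lambda>n. norm (p ^ Suc n))" by simp
qed

lemma eps_partial:
  fixes p :: complex
  shows "(\<Prod>n<2*N. 1 + p ^ Suc n) * (\<Prod>m<N. 1 - p ^ (2*m+1)) =
         (\<Prod>n<2*N. 1 + (-p) ^ Suc n) * (\<Prod>m<N. 1 + p ^ (2*m+1))"
proof (induct N)
  case 0 show ?case by simp
next
  case (Suc N)
  have e: "2 * Suc N = Suc (Suc (2 * N))" by simp
  have m1: "(-p) ^ Suc (2 * N) = - (p ^ Suc (2 * N))" by (rule power_minus_odd) simp
  have m2: "(-p) ^ Suc (Suc (2 * N)) = p ^ Suc (Suc (2 * N))" by (rule power_minus_even) simp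
  have "(\<Prod>n<2*Suc N. 1 + p ^ Suc n) * (\<Prod>m<Suc N. 1 - p ^ (2*m+1)) =
        ((\<Prod>n<2*N. 1 + p ^ Suc n) * (\<Prod>m<N. 1 - p ^ (2*m+1))) *
        ((1 + p ^ Suc (2*N)) * (1 + p ^ Suc (Suc (2*N))) * (1 - p ^ (2*N+1)))"
    unfolding e by (simp add: mult_ac)
  also have "\<dots> = ((\<Prod>n<2*N. 1 + (-p) ^ Suc n) * (\<Prod>m<N. 1 + p ^ (2*m+1))) *
        ((1 + p ^ Suc (2*N)) * (1 + p ^ Suc (Suc (2*N))) * (1 - p ^ (2*N+1)))"
    by (simp only: Suc)
  also have "\<dots> = (\<Prod>n<2*Suc N. 1 + (-p) ^ Suc n) * (\<Prod>m<Suc N. 1 + p ^ (2*m+1))"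
    unfolding e by (simp add: m1 m2 mult_ac)
  finally show ?case .
qed

lemma prod_lim2: fixes f :: "nat \<Rightarrow> complex" assumes "convergent_prod f"
  shows "(\<lambda>N. \<Prod>n<2*N. f n) \<longlonglongrightarrow> prodinf f"
proof -
  have sm: "strict_mono (\<lambda>N::nat. 2 * N)" by (rule strict_monoI) simp
  show ?thesis using LIMSEQ_subseq_LIMSEQ[OF prod_lim[OF assms] sm] by (simp add: o_def)
qed

lemma eps_rel: assumes s: "Im s > 0"
  shows "eps (exp (pi * \<i> * s)) * Qm s = eps (- exp (pi * \<i> * s)) * Qp s"
proof -
  define p where "p = exp (pi * \<i> * s)"
  have np: "norm p < 1" using s by (simp add: p_def norm_exp_eq_Re)
  have np2: "norm (-p) < 1" using np by simp
  have Qp': "Qp s = (\<Prod>m. 1 + p ^ (2*m+1))" by (simp add: Qp_def aa_pow p_def)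
  have Qm': "Qm s = (\<Prod>m. 1 - p ^ (2*m+1))" by (simp add: Qm_def aa_pow p_def)
  have c1: "convergent_prod (\<lambda>m. 1 + p ^ (2*m+1))" using Qp_conv[OF s] by (simp add: aa_pow p_def)
  have c2: "convergent_prod (\<lambda>m. 1 - p ^ (2*m+1))" using Qm_conv[OF s] by (simp add: aa_pow p_def)
  have "(\<lambda>N. (\<Prod>n<2*N. 1 + p ^ Suc n) * (\<Prod>m<N. 1 - p ^ (2*m+1))) \<longlonglongrightarrow> eps p * Qm s"
    unfolding eps_def Qm' by (intro tendsto_mult prod_lim2 prod_lim eps_conv np c2)
  moreover have "(\<lambda>N. (\<Prod>n<2*N. 1 + p ^ Suc n) * (\<Prod>m<N. 1 - p ^ (2*m+1))) \<longlonglongrightarrow> eps (-p) * Qp s"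
    unfolding eps_partial eps_def Qp' by (intro tendsto_mult prod_lim2 prod_lim eps_conv np2 c1)
  ultimately show ?thesis unfolding p_def using LIMSEQ_unique by blast
qed

definition sg :: "int \<Rightarrow> complex" where "sg k = exp (pi * \<i> * of_int k)"

lemma sg_add: "sg (m + n) = sg m * sg n"
  unfolding sg_def mult_exp_exp by (simp add: algebra_simps)

lemma sg_even: "sg (2 * a) = 1"
  using exp_2pi_int[of a] by (simp add: sg_def algebra_simps)

lemma sg_odd: "sg (2 * a + 1) = -1"
  unfolding sg_add sg_even by (simp add: sg_def)

lemma tt0: "tt s 0 n = exp (pi * \<i> * s * (of_int n)^2)" by (simp add: tt_def)
lemma tth: "tt s (1/2) n = exp (pi * \<i> * s * (of_int n)^2) * sg n" by (simp add: tt_def sg_def mult.assoc)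

lemma infsum_prod_int:
  fixes f g :: "int \<Rightarrow> complex"
  assumes f: "f summable_on UNIV" and g: "g summable_on UNIV"
  shows "(\<lambda>(m,n). f m * g n) summable_on UNIV"
    and "(\<Sum>\<^sub>\<infinity>m. f m) * (\<Sum>\<^sub>\<infinity>n. g n) = (\<Sum>\<^sub>\<infinity>(m,n). f m * g n)"
proof -
  have fa: "(\<lambda>m. norm (f m)) summable_on UNIV" using f summable_on_iff_abs_summable_on_complex by blast
  have ga: "(\<lambda>n. norm (g n)) summable_on UNIV" using g summable_on_iff_abs_summable_on_complex by blast
  have "(\<lambda>(m,n). norm (f m) * norm (g n)) summable_on Sigma UNIV (\<lambda>_. UNIV)"
  proof (rule summable_on_SigmaI)
    show "((\<lambda>n. (\<lambda>(m,n). norm (f m) * norm (g n)) (m, n)) has_sum norm (f m) * infsum (\<lambda>n. norm (g n)) UNIV) UNIV" for m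
      using has_sum_cmult_right[OF has_sum_infsum[OF ga], of "norm (f m)"] by simp
    show "(\<lambda>m. norm (f m) * infsum (\<lambda>n. norm (g n)) UNIV) summable_on UNIV"
      by (rule summable_on_cmult_left[OF fa])
  qed auto
  then have "Infinite_Sum.abs_summable_on (\<lambda>(m,n). f m * g n) UNIV"
    by (simp add: case_prod_unfold norm_mult)
  then show sm: "(\<lambda>(m,n). f m * g n) summable_on UNIV" by (rule abs_summable_summable)
  define G where "G = (\<Sum>\<^sub>\<infinity>n. g n)"
  have row: "(\<Sum>\<^sub>\<infinity>n. f m * g n) = f m * G" for m
    unfolding G_def by (rule infsumI[OF has_sum_cmult_right[OF has_sum_infsum[OF g]]])
  have "(\<Sum>\<^sub>\<infinity>(m,n). f m * g n) = (\<Sum>\<^sub>\<infinity>m. \<Sum>\<^sub>\<infinity>n. f m * g n)"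
    using infsum_Sigma'_banach[of "\<lambda>m n. f m * g n" UNIV "\<lambda>_. UNIV"] sm by simp
  also have "\<dots> = (\<Sum>\<^sub>\<infinity>m. f m * G)" by (simp add: row)
  also have "\<dots> = (\<Sum>\<^sub>\<infinity>m. f m) * G"
    by (rule infsumI[OF has_sum_cmult_left[OF has_sum_infsum[OF f]]])
  finally show "(\<Sum>\<^sub>\<infinity>m. f m) * (\<Sum>\<^sub>\<infinity>n. g n) = (\<Sum>\<^sub>\<infinity>(m,n). f m * g n)"
    by (simp add: G_def)
qed

lemma even_reindex:
  fixes F :: "int \<times> int \<Rightarrow> complex"
  shows "(\<Sum>\<^sub>\<infinity>x. F x * (1 + sg (fst x + snd x))) = 2 * (\<Sum>\<^sub>\<infinity>x. F (fst x + snd x, fst x - snd x))"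
proof -
  define h :: "int \<times> int \<Rightarrow> int \<times> int" where "h = (\<lambda>(a,b). (a+b, a-b))"
  have inj: "inj h" unfolding h_def inj_def by auto
  have out: "F x * (1 + sg (fst x + snd x)) = 0" if "x \<notin> range h" for x
  proof -
    obtain m n where x: "x = (m, n)" by (cases x)
    have "odd (m + n)"
    proof
      assume "even (m + n)"
      then obtain k where k: "m + n = 2 * k" by (rule evenE)
      have "x = h (k, m - k)" using k by (simp add: h_def x)
      with that show False by auto
    qed
    then obtain k where "m + n = 2 * k + 1" by (rule oddE)
    then show ?thesis by (simp add: x sg_odd)
  qed
  have "(\<Sum>\<^sub>\<infinity>x. F x * (1 + sg (fst x + snd x))) = (\<Sum>\<^sub>\<infinity>x\<in>range h. F x * (1 + sg (fst x + snd x)))"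
    by (rule infsum_cong_neutral) (use out in auto)
  also have "\<dots> = (\<Sum>\<^sub>\<infinity>y. (\<lambda>x. F x * (1 + sg (fst x + snd x))) (h y))"
    using infsum_reindex[OF inj_on_subset[OF inj subset_UNIV], of "\<lambda>x. F x * (1 + sg (fst x + snd x))"]
    by (simp add: o_def)
  also have "\<dots> = (\<Sum>\<^sub>\<infinity>y. 2 * F (fst y + snd y, fst y - snd y))"
  proof (rule infsum_cong)
    fix y :: "int \<times> int"
    obtain a b where y: "y = (a, b)" by (cases y)
    have ab: "a + b + (a - b) = 2 * a" by simp
    have "sg (a + b + (a - b)) = 1" unfolding ab by (rule sg_even)
    then show "(\<lambda>x. F x * (1 + sg (fst x + snd x))) (h y) = 2 * F (fst y + snd y, fst y - snd y)"
      by (simp add: h_def y)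
  qed
  also have "\<dots> = 2 * (\<Sum>\<^sub>\<infinity>y. F (fst y + snd y, fst y - snd y))"
    by (rule infsum_cmult_right') 
  finally show ?thesis .
qed

lemma vv: "exp (pi * \<i> * s * (of_int (a + b))^2) * exp (pi * \<i> * s * (of_int (a - b))^2) =
   exp (pi * \<i> * (2 * s) * (of_int a)^2) * exp (pi * \<i> * (2 * s) * (of_int b)^2)"
  unfolding mult_exp_exp by (simp add: power2_eq_square algebra_simps)

lemma prod_th: assumes s: "Im s > 0"
  shows "theta3 z s * theta3 z' s = (\<Sum>\<^sub>\<infinity>x. tt s z (fst x) * tt s z' (snd x))"
    and "(\<lambda>x. tt s z (fst x) * tt s z' (snd x)) summable_on UNIV"
  using infsum_prod_int[OF tt_summable[OF s] tt_summable[OF s], of z z']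
  by (simp_all add: theta3_tt case_prod_unfold)

lemma sg_sq: "sg m * sg m = 1"
proof -
  have "sg m * sg m = sg (m + m)" by (rule sg_add[symmetric])
  also have "m + m = 2 * m" by simp
  also have "sg (2 * m) = 1" by (rule sg_even)
  finally show ?thesis .
qed

lemma dup1: assumes s: "Im s > 0"
  shows "theta3 0 s ^ 2 + theta3 (1/2) s ^ 2 = 2 * theta3 0 (2 * s) ^ 2"
proof -
  have s2: "Im (2 * s) > 0" using s by simp
  have "theta3 0 s ^ 2 + theta3 (1/2) s ^ 2 =
     (\<Sum>\<^sub>\<infinity>x. tt s 0 (fst x) * tt s 0 (snd x)) + (\<Sum>\<^sub>\<infinity>x. tt s (1/2) (fst x) * tt s (1/2) (snd x))"
    by (simp add: power2_eq_square prod_th[OF s])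
  also have "\<dots> = (\<Sum>\<^sub>\<infinity>x. tt s 0 (fst x) * tt s 0 (snd x) + tt s (1/2) (fst x) * tt s (1/2) (snd x))"
    by (rule infsum_add[symmetric]) (rule prod_th(2)[OF s])+
  also have "\<dots> = (\<Sum>\<^sub>\<infinity>x. (tt s 0 (fst x) * tt s 0 (snd x)) * (1 + sg (fst x + snd x)))"
    by (rule infsum_cong) (simp add: tt0 tth sg_add algebra_simps)
  also have "\<dots> = 2 * (\<Sum>\<^sub>\<infinity>x. tt s 0 (fst x + snd x) * tt s 0 (fst x - snd x))"
    using even_reindex[of "\<lambda>x. tt s 0 (fst x) * tt s 0 (snd x)"] by simp
  also have "(\<Sum>\<^sub>\<infinity>x. tt s 0 (fst x + snd x) * tt s 0 (fst x - snd x)) = (\<Sum>\<^sub>\<infinity>x. tt (2 * s) 0 (fst x) * tt (2 * s) 0 (snd x))"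
    by (rule infsum_cong) (simp only: tt0 vv)
  also have "\<dots> = theta3 0 (2 * s) ^ 2"
    by (simp add: power2_eq_square prod_th[OF s2])
  finally show ?thesis .
qed

lemma dup2: assumes s: "Im s > 0"
  shows "theta3 0 s * theta3 (1/2) s = theta3 (1/2) (2 * s) ^ 2"
proof -
  have s2: "Im (2 * s) > 0" using s by simp
  have th: "tt t (1/2) n = tt t 0 n * sg n" for t n by (simp add: tt0 tth)
  have "2 * (theta3 0 s * theta3 (1/2) s) = theta3 0 s * theta3 (1/2) s + theta3 (1/2) s * theta3 0 s"
    by (simp add: mult.commute)
  also have "\<dots> = (\<Sum>\<^sub>\<infinity>x. tt s 0 (fst x) * tt s (1/2) (snd x)) + (\<Sum>\<^sub>\<infinity>x. tt s (1/2) (fst x) * tt s 0 (snd x))"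
    by (simp only: prod_th(1)[OF s])
  also have "\<dots> = (\<Sum>\<^sub>\<infinity>x. tt s 0 (fst x) * tt s (1/2) (snd x) + tt s (1/2) (fst x) * tt s 0 (snd x))"
    by (rule infsum_add[symmetric]) (rule prod_th(2)[OF s])+
  also have "\<dots> = (\<Sum>\<^sub>\<infinity>x. (sg (fst x) * tt s 0 (fst x) * tt s 0 (snd x)) * (1 + sg (fst x + snd x)))"
  proof (rule infsum_cong)
    fix x :: "int \<times> int"
    have sgf: "sg (fst x) * sg (fst x + snd x) = sg (snd x)"
    proof -
      have "sg (fst x) * sg (fst x + snd x) = (sg (fst x) * sg (fst x)) * sg (snd x)"
        by (simp only: sg_add mult.assoc)
      then show ?thesis by (simp only: sg_sq mult_1_left)
    qed
    have "(sg (fst x) * tt s 0 (fst x) * tt s 0 (snd x)) * (1 + sg (fst x + snd x)) =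
        tt s 0 (fst x) * tt s 0 (snd x) * (sg (fst x) + sg (fst x) * sg (fst x + snd x))"
      by (simp add: algebra_simps)
    also have "\<dots> = tt s 0 (fst x) * tt s 0 (snd x) * (sg (fst x) + sg (snd x))"
      by (simp only: sgf)
    also have "\<dots> = tt s 0 (fst x) * tt s (1/2) (snd x) + tt s (1/2) (fst x) * tt s 0 (snd x)"
      by (simp only: th) (simp add: algebra_simps)
    finally show "tt s 0 (fst x) * tt s (1/2) (snd x) + tt s (1/2) (fst x) * tt s 0 (snd x) =
        (sg (fst x) * tt s 0 (fst x) * tt s 0 (snd x)) * (1 + sg (fst x + snd x))" by simp
  qed
  also have "\<dots> = 2 * (\<Sum>\<^sub>\<infinity>x. sg (fst x + snd x) * tt s 0 (fst x + snd x) * tt s 0 (fst x - snd x))"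
    using even_reindex[of "\<lambda>x. sg (fst x) * tt s 0 (fst x) * tt s 0 (snd x)"] by simp
  also have "(\<Sum>\<^sub>\<infinity>x. sg (fst x + snd x) * tt s 0 (fst x + snd x) * tt s 0 (fst x - snd x)) =
       (\<Sum>\<^sub>\<infinity>x. tt (2 * s) (1/2) (fst x) * tt (2 * s) (1/2) (snd x))"
  proof (rule infsum_cong)
    fix x :: "int \<times> int"
    have eq: "tt s 0 (fst x + snd x) * tt s 0 (fst x - snd x) = tt (2 * s) 0 (fst x) * tt (2 * s) 0 (snd x)"
      by (simp only: tt0 vv)
    have "sg (fst x + snd x) * tt s 0 (fst x + snd x) * tt s 0 (fst x - snd x) =
       sg (fst x) * sg (snd x) * (tt s 0 (fst x + snd x) * tt s 0 (fst x - snd x))"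
      by (simp only: sg_add mult.assoc)
    also have "\<dots> = sg (fst x) * sg (snd x) * (tt (2 * s) 0 (fst x) * tt (2 * s) 0 (snd x))"
      by (simp only: eq)
    also have "\<dots> = tt (2 * s) (1/2) (fst x) * tt (2 * s) (1/2) (snd x)"
      by (simp only: th) (simp add: mult_ac)
    finally show "sg (fst x + snd x) * tt s 0 (fst x + snd x) * tt s 0 (fst x - snd x) =
       tt (2 * s) (1/2) (fst x) * tt (2 * s) (1/2) (snd x)" .
  qed
  also have "\<dots> = theta3 (1/2) (2 * s) ^ 2"
    by (simp add: power2_eq_square prod_th[OF s2])
  finally show ?thesis by simp
qed

lemma final_alg:
  fixes a b A K E1 E2 :: complex
  assumes h1: "a * E1^2 = b * E2^2" and h2: "a^2 + b^2 = 2 * A^2" and h3: "K * A^2 = a * b"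
  shows "a^2 * A^2 * (2 * E1^2 * E2^2 - K * (E1^4 + E2^4)) = 0"
  using assms by algebra

theorem lemma2p4:
  fixes \<tau> q :: complex
  assumes "Im \<tau> > 0"
    and "q = exp (pi * \<i> * ((4 * \<tau> - 1) / (4 * \<tau>)))"
  shows "2 * (eps q)^2 * (eps_bar q)^2
         - (theta2 0 (2 * \<tau>) / theta3 0 (2 * \<tau>))^2 * ((eps q)^4 + (eps_bar q)^4) = 0"
proof -
  have tnz: "\<tau> \<noteq> 0" using assms(1) by auto
  define \<sigma> where "\<sigma> = - 1 / (4 * \<tau>)"
  have s: "Im \<sigma> > 0" unfolding \<sigma>_def by (rule Im_inv_neg) (use assms(1) in simp)
  have s2: "Im (2 * \<sigma>) > 0" using s by simp
  have t: "Im (2 * \<tau>) > 0" using assms(1) by simp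
  define p where "p = exp (pi * \<i> * \<sigma>)"
  have qp: "q = - p"
  proof -
    have "pi * \<i> * ((4 * \<tau> - 1) / (4 * \<tau>)) = pi * \<i> + pi * \<i> * \<sigma>"
      using tnz by (simp add: \<sigma>_def field_simps)
    then show ?thesis unfolding assms(2) p_def by (simp add: exp_add)
  qed
  have m2: "- 1 / (2 * \<tau>) = 2 * \<sigma>" using tnz by (simp add: \<sigma>_def field_simps)
  define a where "a = theta3 0 \<sigma>"
  define b where "b = theta3 (1/2) \<sigma>"
  define A where "A = theta3 0 (2 * \<sigma>)"
  define B where "B = theta3 (1/2) (2 * \<sigma>)"
  define E1 where "E1 = eps q"
  define E2 where "E2 = eps_bar q"
  have E1: "E1 = eps (- p)" by (simp add: E1_def qp)
  have E2: "E2 = eps p" by (simp add: E2_def eps_bar_def qp)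
  have anz: "a \<noteq> 0" unfolding a_def by (rule theta3_0_nz[OF s])
  have Anz: "A \<noteq> 0" unfolding A_def by (rule theta3_0_nz[OF s2])
  have T0nz: "theta3 0 (2 * \<tau>) \<noteq> 0" by (rule theta3_0_nz[OF t])
  have M: "A * theta2 0 (2 * \<tau>) = B * theta3 0 (2 * \<tau>)"
    using modular[OF t] unfolding m2 A_def B_def .
  have ratio: "theta2 0 (2 * \<tau>) / theta3 0 (2 * \<tau>) = B / A"
    using M Anz T0nz by (simp add: field_simps)
  have h2: "a^2 + b^2 = 2 * A^2" unfolding a_def b_def A_def by (rule dup1[OF s])
  have D2: "a * b = B^2" unfolding a_def b_def B_def by (rule dup2[OF s])
  have P: "Qm \<sigma> ^ 2 * a = Qp \<sigma> ^ 2 * b"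
    using prod_rel[OF s] unfolding a_def b_def PP0_Qp[OF s] PPh_Qm[OF s] .
  have Qpnz: "Qp \<sigma> ^ 2 \<noteq> 0" using PP0_nz[OF s] PP0_Qp[OF s] by simp
  have E: "E2 * Qm \<sigma> = E1 * Qp \<sigma>" using eps_rel[OF s] unfolding E1 E2 p_def .
  then have "E2^2 * Qm \<sigma> ^ 2 = E1^2 * Qp \<sigma> ^ 2" by (metis power_mult_distrib)
  then have "Qp \<sigma> ^ 2 * (b * E2^2) = Qp \<sigma> ^ 2 * (a * E1^2)" using P
    by (metis mult.commute mult.left_commute)
  then have h1: "a * E1^2 = b * E2^2" using Qpnz by simp
  define K where "K = (B / A)^2"
  have h3: "K * A^2 = a * b" using Anz D2 by (simp add: K_def power_divide)
  have "a^2 * A^2 * (2 * E1^2 * E2^2 - K * (E1^4 + E2^4)) = 0"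
    by (rule final_alg[OF h1 h2 h3])
  then have "2 * E1^2 * E2^2 - K * (E1^4 + E2^4) = 0" using anz Anz by simp
  then show ?thesis by (simp add: ratio K_def E1_def E2_def)
qed


end
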